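(* Let $M$ be a smooth $n$-dimensional manifold endowed with a (pseudo-Riemannian) metric $g$ of arbitrary signature. Then for every smooth vector field $V$ on $M$, \[ \Box V+\mathrm{div}\big(\mathcal L_Vg-\mathrm{div}(V)\,g\big)^\sharp=\mathrm{Ric}^\sharp(V), \] \[ \Box\mathcal L_Vg-2\,\mathrm{Riem}(\mathcal L_Vg)-\mathcal L_{\Box V}g =2\,\mathcal L_V\mathrm{Ric}-\mathcal L_{\mathrm{Ric}^\sharp(V)}g-2\,\mathrm{sym}\big[\mathrm{Ric}^\sharp(\mathcal L_Vg)\big]. \]
   Context: $\nabla$ is the Levi-Civita connection of $g$, with curvature conventions $R_{abc}{}^d\omega_d=(\nabla_a\nabla_b-\nabla_b\nabla_a)\omega_c$ and $R_{ab}=R_{acb}{}^c$ (the Ricci tensor $\mathrm{Ric}$); indices are raised and lowered with $g$, and $\sharp$ raises an index. For a vector field or covariant 2-tensor $u$, $\Box u:=-\nabla^c\nabla_cu$. $\mathrm{Riem}(u)_{ab}:=R_a{}^c{}_b{}^du_{cd}$; $\mathrm{div}(V):=\nabla_aV^a$; $\mathrm{div}(u)_b:=\nabla^au_{ab}$; $\mathrm{Ric}^\sharp(V)$ is the vector field $R_a{}^bV_b$; $\mathrm{Ric}^\sharp(u)_{ab}:=R_a{}^cu_{cb}$; $\mathrm{sym}[u]_{ab}:=\tfrac12(u_{ab}+u_{ba})$; $\mathcal L$ is the Lie derivative. *)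

theory Defs
  imports "HOL-Analysis.Analysis"
begin

text \<open>Local coordinate formalisation: a chart domain U (open subset of R^n, n = CARD('n)),
metric components g x $ i $ j, vector field components V x $ i.
Tensor fields are functions from index lists to scalar fields.\<close>

definition pd :: "'n::finite \<Rightarrow> (real^'n \<Rightarrow> real) \<Rightarrow> real^'n \<Rightarrow> real" where
  "pd i f x = deriv (\<lambda>t. f (x + t *\<^sub>R axis i 1)) 0"

fun pds :: "'n::finite list \<Rightarrow> (real^'n \<Rightarrow> real) \<Rightarrow> real^'n \<Rightarrow> real" where
  "pds [] f = f"
| "pds (i # is) f = pd i (pds is f)"

definition smooth_on :: "(real^'n::finite) set \<Rightarrow> (real^'n \<Rightarrow> real) \<Rightarrow> bool" where
  "smooth_on U f \<longleftrightarrow> (\<forall>is. continuous_on U (pds is f) \<and>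
     (\<forall>i. \<forall>x\<in>U. ((\<lambda>t. pds is f (x + t *\<^sub>R axis i 1)) has_real_derivative pds (i # is) f x) (at 0)))"

definition ginv :: "(real^'n::finite \<Rightarrow> real^'n^'n) \<Rightarrow> real^'n \<Rightarrow> real^'n^'n" where
  "ginv g x = matrix_inv (g x)"

text \<open>Christoffel symbols: chr g x k i j = Gamma^k_{ij}.\<close>
definition chr :: "(real^'n::finite \<Rightarrow> real^'n^'n) \<Rightarrow> real^'n \<Rightarrow> 'n \<Rightarrow> 'n \<Rightarrow> 'n \<Rightarrow> real" where
  "chr g x k i j = (1/2) * (\<Sum>l\<in>UNIV. ginv g x $ k $ l *
     (pd i (\<lambda>y. g y $ j $ l) x + pd j (\<lambda>y. g y $ i $ l) x - pd l (\<lambda>y. g y $ i $ j) x))"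

text \<open>Levi-Civita covariant derivative of a tensor field T with index variances vs
(True = contravariant/upper, False = covariant/lower); the new derivative index comes first:
covD g vs T (c # js) = nabla_c T_{js}.\<close>
definition covD :: "(real^'n::finite \<Rightarrow> real^'n^'n) \<Rightarrow> bool list \<Rightarrow> ('n list \<Rightarrow> real^'n \<Rightarrow> real)
    \<Rightarrow> 'n list \<Rightarrow> real^'n \<Rightarrow> real" where
  "covD g vs T idx x = (case idx of [] \<Rightarrow> 0 | c # js \<Rightarrow>
     pd c (T js) x + (\<Sum>p<length vs. \<Sum>d\<in>UNIV.
        (if vs ! p then chr g x (js ! p) c d * T (js[p := d]) x
         else - chr g x d c (js ! p) * T (js[p := d]) x)))"

text \<open>Riemann tensor riem g x a b c d = R_{abc}^d, with
(nabla_a nabla_b - nabla_b nabla_a) omega_c = R_{abc}^d omega_d.\<close>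
definition riem :: "(real^'n::finite \<Rightarrow> real^'n^'n) \<Rightarrow> real^'n \<Rightarrow> 'n \<Rightarrow> 'n \<Rightarrow> 'n \<Rightarrow> 'n \<Rightarrow> real" where
  "riem g x a b c d = pd b (\<lambda>y. chr g y d a c) x - pd a (\<lambda>y. chr g y d b c) x
     + (\<Sum>e\<in>UNIV. chr g x e a c * chr g x d b e - chr g x e b c * chr g x d a e)"

definition ric :: "(real^'n::finite \<Rightarrow> real^'n^'n) \<Rightarrow> 'n \<Rightarrow> 'n \<Rightarrow> real^'n \<Rightarrow> real" where
  "ric g a b x = (\<Sum>c\<in>UNIV. riem g x a c b c)"

text \<open>Covariant 2-tensors are functions u a b x = u_{ab}(x).\<close>
definition vt :: "(real^'n::finite \<Rightarrow> real^'n) \<Rightarrow> 'n list \<Rightarrow> real^'n \<Rightarrow> real" where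
  "vt V idx x = V x $ (idx ! 0)"

definition t2 :: "('n::finite \<Rightarrow> 'n \<Rightarrow> real^'n \<Rightarrow> real) \<Rightarrow> 'n list \<Rightarrow> real^'n \<Rightarrow> real" where
  "t2 u idx x = u (idx ! 0) (idx ! 1) x"

definition gt :: "(real^'n::finite \<Rightarrow> real^'n^'n) \<Rightarrow> 'n \<Rightarrow> 'n \<Rightarrow> real^'n \<Rightarrow> real" where
  "gt g a b x = g x $ a $ b"

definition lie2 :: "(real^'n::finite \<Rightarrow> real^'n) \<Rightarrow> ('n \<Rightarrow> 'n \<Rightarrow> real^'n \<Rightarrow> real)
    \<Rightarrow> 'n \<Rightarrow> 'n \<Rightarrow> real^'n \<Rightarrow> real" where
  "lie2 W u a b x = (\<Sum>c\<in>UNIV. W x $ c * pd c (u a b) x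
      + u c b x * pd a (\<lambda>y. W y $ c) x + u a c x * pd b (\<lambda>y. W y $ c) x)"

definition boxV :: "(real^'n::finite \<Rightarrow> real^'n^'n) \<Rightarrow> (real^'n \<Rightarrow> real^'n) \<Rightarrow> real^'n \<Rightarrow> real^'n" where
  "boxV g V x = (\<chi> a. - (\<Sum>c\<in>UNIV. \<Sum>d\<in>UNIV. ginv g x $ c $ d *
      covD g [False, True] (covD g [True] (vt V)) [c, d, a] x))"

definition boxT :: "(real^'n::finite \<Rightarrow> real^'n^'n) \<Rightarrow> ('n \<Rightarrow> 'n \<Rightarrow> real^'n \<Rightarrow> real)
    \<Rightarrow> 'n \<Rightarrow> 'n \<Rightarrow> real^'n \<Rightarrow> real" where
  "boxT g u a b x = - (\<Sum>c\<in>UNIV. \<Sum>d\<in>UNIV. ginv g x $ c $ d *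
      covD g [False, False, False] (covD g [False, False] (t2 u)) [c, d, a, b] x)"

definition divV :: "(real^'n::finite \<Rightarrow> real^'n^'n) \<Rightarrow> (real^'n \<Rightarrow> real^'n) \<Rightarrow> real^'n \<Rightarrow> real" where
  "divV g V x = (\<Sum>a\<in>UNIV. covD g [True] (vt V) [a, a] x)"

definition divT :: "(real^'n::finite \<Rightarrow> real^'n^'n) \<Rightarrow> ('n \<Rightarrow> 'n \<Rightarrow> real^'n \<Rightarrow> real)
    \<Rightarrow> 'n \<Rightarrow> real^'n \<Rightarrow> real" where
  "divT g u b x = (\<Sum>a\<in>UNIV. \<Sum>c\<in>UNIV. ginv g x $ a $ c * covD g [False, False] (t2 u) [c, a, b] x)"

definition raise :: "(real^'n::finite \<Rightarrow> real^'n^'n) \<Rightarrow> ('n \<Rightarrow> real^'n \<Rightarrow> real) \<Rightarrow> real^'n \<Rightarrow> real^'n" where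
  "raise g w x = (\<chi> a. \<Sum>b\<in>UNIV. ginv g x $ a $ b * w b x)"

definition ricV :: "(real^'n::finite \<Rightarrow> real^'n^'n) \<Rightarrow> (real^'n \<Rightarrow> real^'n) \<Rightarrow> real^'n \<Rightarrow> real^'n" where
  "ricV g V x = (\<chi> a. \<Sum>b\<in>UNIV. \<Sum>c\<in>UNIV. ginv g x $ a $ c * ric g c b x * V x $ b)"

definition riemT :: "(real^'n::finite \<Rightarrow> real^'n^'n) \<Rightarrow> ('n \<Rightarrow> 'n \<Rightarrow> real^'n \<Rightarrow> real)
    \<Rightarrow> 'n \<Rightarrow> 'n \<Rightarrow> real^'n \<Rightarrow> real" where
  "riemT g u a b x = (\<Sum>c\<in>UNIV. \<Sum>d\<in>UNIV. \<Sum>e\<in>UNIV. ginv g x $ c $ e * riem g x a e b d * u c d x)"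

definition ricT :: "(real^'n::finite \<Rightarrow> real^'n^'n) \<Rightarrow> ('n \<Rightarrow> 'n \<Rightarrow> real^'n \<Rightarrow> real)
    \<Rightarrow> 'n \<Rightarrow> 'n \<Rightarrow> real^'n \<Rightarrow> real" where
  "ricT g u a b x = (\<Sum>c\<in>UNIV. \<Sum>d\<in>UNIV. ginv g x $ c $ d * ric g a d x * u c b x)"

definition symT :: "('n \<Rightarrow> 'n \<Rightarrow> real^'n \<Rightarrow> real) \<Rightarrow> 'n \<Rightarrow> 'n \<Rightarrow> real^'n \<Rightarrow> real" where
  "symT u a b x = (u a b x + u b a x) / 2"

end

theory Submission
  imports Defs
begin

lemma pds_append: "pds (is @ [i]) f = pds is (pd i f)"
  by (induction "is") auto

lemma pd_eq:
  assumes "((\<lambda>t. F (x + t *\<^sub>R axis i 1)) has_real_derivative D) (at 0)"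
  shows "pd i F x = D"
  unfolding pd_def using assms by (rule DERIV_imp_deriv)

lemma ev_line_in:
  fixes x :: "real^'n::finite"
  assumes "open U" "x \<in> U"
  shows "eventually (\<lambda>t. x + t *\<^sub>R v \<in> U) (nhds 0)"
proof -
  have "open ((\<lambda>t::real. x + t *\<^sub>R v) -` U)"
    by (rule open_vimage[OF assms(1)]) (intro continuous_intros)
  moreover have "(0::real) \<in> (\<lambda>t::real. x + t *\<^sub>R v) -` U" using assms by simp
  ultimately show ?thesis
    by (rule eventually_nhds_in_open[THEN eventually_mono]) simp
qed

lemma pd_local:
  assumes "open U" "x \<in> U" "\<forall>y\<in>U. f y = h y"
  shows "pd i f x = pd i h x"
proof -
  have ev: "eventually (\<lambda>t. f (x + t *\<^sub>R axis i 1) = h (x + t *\<^sub>R axis i 1)) (nhds 0)"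
    using ev_line_in[OF assms(1,2), of "axis i 1"] by eventually_elim (use assms in auto)
  have "\<And>D. DERIV (\<lambda>t. f (x + t *\<^sub>R axis i 1)) 0 :> D \<longleftrightarrow> DERIV (\<lambda>t. h (x + t *\<^sub>R axis i 1)) 0 :> D"
    by (rule DERIV_cong_ev[OF refl ev refl])
  then show ?thesis unfolding pd_def deriv_def by simp
qed

definition hasd :: "(real^'n::finite) set \<Rightarrow> (real^'n \<Rightarrow> real) \<Rightarrow> bool" where
  "hasd U f \<longleftrightarrow> (\<forall>x\<in>U. \<forall>i. ((\<lambda>t. f (x + t *\<^sub>R axis i 1)) has_real_derivative pd i f x) (at 0))"

fun nsm :: "(real^'n::finite) set \<Rightarrow> nat \<Rightarrow> (real^'n \<Rightarrow> real) \<Rightarrow> bool" where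
  "nsm U 0 f = (continuous_on U f \<and> hasd U f)"
| "nsm U (Suc n) f = (nsm U 0 f \<and> (\<forall>i. nsm U n (pd i f)))"

lemma nsm_0D: "nsm U n f \<Longrightarrow> nsm U 0 f"
proof (cases n)
  case (Suc m) assume "nsm U n f" then show ?thesis using Suc by (simp only: nsm.simps(2))
qed simp

lemma nsm_SucD: "nsm U (Suc n) f \<Longrightarrow> nsm U n f"
  by (induction n arbitrary: f) (auto intro: nsm_0D)

lemma nsm_pds: "nsm U n f \<Longrightarrow> length is \<le> n \<Longrightarrow> nsm U 0 (pds is f)"
proof (induction "is" arbitrary: n f rule: rev_induct)
  case Nil then show ?case using nsm_0D[of U n f] by simp
next
  case (snoc i "is")
  then obtain m where m: "n = Suc m" by (cases n) auto
  with snoc show ?case by (auto simp: pds_append)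
qed

lemma smooth_on_pd: "smooth_on U f \<Longrightarrow> smooth_on U (pd i f)"
  unfolding smooth_on_def
proof (rule allI, rule conjI)
  fix "is" assume A: "\<forall>is. continuous_on U (pds is f) \<and>
     (\<forall>i. \<forall>x\<in>U. ((\<lambda>t. pds is f (x + t *\<^sub>R axis i 1)) has_real_derivative pds (i # is) f x) (at 0))"
  show "continuous_on U (pds is (pd i f))" using A[rule_format, of "is @ [i]"] by (simp add: pds_append)
  show "\<forall>j. \<forall>x\<in>U. ((\<lambda>t. pds is (pd i f) (x + t *\<^sub>R axis j 1)) has_real_derivative pds (j # is) (pd i f) x) (at 0)"
  proof (intro allI ballI)
    fix j x assume x: "x \<in> U"
    have "((\<lambda>t. pds (is @ [i]) f (x + t *\<^sub>R axis j 1)) has_real_derivative pds (j # (is @ [i])) f x) (at 0)"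
      using A x by blast
    then show "((\<lambda>t. pds is (pd i f) (x + t *\<^sub>R axis j 1)) has_real_derivative pds (j # is) (pd i f) x) (at 0)"
      by (simp only: pds_append pds.simps)
  qed
qed

lemma smooth_on_nsm0: "smooth_on U f \<Longrightarrow> nsm U 0 f"
  unfolding smooth_on_def hasd_def
proof -
  assume A: "\<forall>is. continuous_on U (pds is f) \<and>
     (\<forall>i. \<forall>x\<in>U. ((\<lambda>t. pds is f (x + t *\<^sub>R axis i 1)) has_real_derivative pds (i # is) f x) (at 0))"
  have A0: "continuous_on U (pds [] f) \<and>
     (\<forall>i. \<forall>x\<in>U. ((\<lambda>t. pds [] f (x + t *\<^sub>R axis i 1)) has_real_derivative pds [i] f x) (at 0))"
    using A by blast
  have "continuous_on U f" using A0 by simp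
  moreover have "hasd U f" unfolding hasd_def using A0 by simp
  ultimately show "nsm U 0 f" by simp
qed

lemma smooth_on_nsm: "smooth_on U f \<longleftrightarrow> (\<forall>n. nsm U n f)"
proof
  assume sm: "smooth_on U f"
  have "smooth_on U f \<Longrightarrow> nsm U n f" for n
  proof (induction n arbitrary: f)
    case 0
    then show ?case by (rule smooth_on_nsm0)
  next
    case (Suc n)
    have "nsm U n (pd i f)" for i using Suc.IH smooth_on_pd Suc.prems by blast
    then show ?case using smooth_on_nsm0[OF Suc.prems] by simp
  qed
  with sm show "\<forall>n. nsm U n f" by blast
next
  assume A: "\<forall>n. nsm U n f"
  show "smooth_on U f" unfolding smooth_on_def
  proof (rule allI, rule conjI)
    fix "is"
    have "nsm U 0 (pds is f)" using nsm_pds A by blast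
    then show "continuous_on U (pds is f)"
      and "\<forall>i. \<forall>x\<in>U. ((\<lambda>t. pds is f (x + t *\<^sub>R axis i 1)) has_real_derivative pds (i # is) f x) (at 0)"
      unfolding nsm.simps hasd_def pds.simps by blast+
  qed
qed

lemma hasd_cong:
  assumes "open U" "\<forall>y\<in>U. f y = h y" "hasd U f"
  shows "hasd U h"
  unfolding hasd_def
proof (intro ballI allI)
  fix x i assume x: "x \<in> U"
  have ev: "eventually (\<lambda>t. f (x + t *\<^sub>R axis i 1) = h (x + t *\<^sub>R axis i 1)) (nhds 0)"
    using ev_line_in[OF assms(1) x, of "axis i 1"] by eventually_elim (use assms in auto)
  have "pd i f x = pd i h x" using pd_local assms x by blast
  moreover have "((\<lambda>t. f (x + t *\<^sub>R axis i 1)) has_real_derivative pd i f x) (at 0)"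
    using assms(3) x by (simp add: hasd_def)
  ultimately show "((\<lambda>t. h (x + t *\<^sub>R axis i 1)) has_real_derivative pd i h x) (at 0)"
    using DERIV_cong_ev[OF refl ev, of "pd i f x" "pd i h x"] by simp
qed

lemma nsm_cong:
  assumes "open U" "\<forall>y\<in>U. f y = h y" "nsm U n f"
  shows "nsm U n h"
  using assms(2,3)
proof (induction n arbitrary: f h)
  case 0 then show ?case
    using hasd_cong[OF assms(1)] continuous_on_cong by (metis nsm.simps(1))
next
  case (Suc n)
  have "\<forall>y\<in>U. pd i f y = pd i h y" for i using pd_local[OF assms(1)] Suc.prems by blast
  with Suc show ?case
    using hasd_cong[OF assms(1)] continuous_on_cong by (metis nsm.simps)
qed

lemma hasd_add:
  assumes "hasd U f" "hasd U h"
  shows "hasd U (\<lambda>y. f y + h y)" and "\<forall>x\<in>U. pd i (\<lambda>y. f y + h y) x = pd i f x + pd i h x"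
proof -
  have D: "((\<lambda>t. f (x + t *\<^sub>R axis i 1) + h (x + t *\<^sub>R axis i 1)) has_real_derivative pd i f x + pd i h x) (at 0)"
    if "x \<in> U" for x i using assms that unfolding hasd_def by (intro DERIV_add) auto
  then have P: "pd i (\<lambda>y. f y + h y) x = pd i f x + pd i h x" if "x \<in> U" for x i
    using that by (intro pd_eq D)
  then show "\<forall>x\<in>U. pd i (\<lambda>y. f y + h y) x = pd i f x + pd i h x" by blast
  from D P show "hasd U (\<lambda>y. f y + h y)" unfolding hasd_def by simp
qed

lemma hasd_mult:
  assumes "hasd U f" "hasd U h"
  shows "hasd U (\<lambda>y. f y * h y)" and "\<forall>x\<in>U. pd i (\<lambda>y. f y * h y) x = pd i f x * h x + f x * pd i h x"
proof -
  have D: "((\<lambda>t. f (x + t *\<^sub>R axis i 1) * h (x + t *\<^sub>R axis i 1)) has_real_derivative pd i f x * h x + f x * pd i h x) (at 0)"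
    if "x \<in> U" for x i
  proof -
    have Df: "((\<lambda>t. f (x + t *\<^sub>R axis i 1)) has_real_derivative pd i f x) (at 0)"
      and Dh: "((\<lambda>t. h (x + t *\<^sub>R axis i 1)) has_real_derivative pd i h x) (at 0)"
      using assms that unfolding hasd_def by auto
    show ?thesis using DERIV_mult[OF Df Dh] by (simp add: algebra_simps)
  qed
  then have P: "pd i (\<lambda>y. f y * h y) x = pd i f x * h x + f x * pd i h x" if "x \<in> U" for x i
    using that by (intro pd_eq D)
  then show "\<forall>x\<in>U. pd i (\<lambda>y. f y * h y) x = pd i f x * h x + f x * pd i h x" by blast
  from D P show "hasd U (\<lambda>y. f y * h y)" unfolding hasd_def by simp
qed

lemma pd_const: "pd i (\<lambda>y. c) x = 0"
  by (rule pd_eq) simp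

lemma hasd_const: "hasd U (\<lambda>y. c)"
  unfolding hasd_def by (simp add: pd_const)

lemma hasd_inverse:
  assumes "hasd U f" "\<forall>y\<in>U. f y \<noteq> 0"
  shows "hasd U (\<lambda>y. inverse (f y))"
    and "\<forall>x\<in>U. pd i (\<lambda>y. inverse (f y)) x = - (pd i f x * (inverse (f x) * inverse (f x)))"
proof -
  have D: "((\<lambda>t. inverse (f (x + t *\<^sub>R axis i 1))) has_real_derivative - (pd i f x * (inverse (f x) * inverse (f x)))) (at 0)"
    if "x \<in> U" for x i
  proof -
    have Df: "((\<lambda>t. f (x + t *\<^sub>R axis i 1)) has_real_derivative pd i f x) (at 0)"
      using assms that unfolding hasd_def by auto
    have "f (x + 0 *\<^sub>R axis i 1) \<noteq> 0" using assms that by simp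
    from DERIV_inverse_fun[OF Df this] show ?thesis by (simp add: power2_eq_square field_simps)
  qed
  then have P: "pd i (\<lambda>y. inverse (f y)) x = - (pd i f x * (inverse (f x) * inverse (f x)))" if "x \<in> U" for x i
    using that by (intro pd_eq D)
  then show "\<forall>x\<in>U. pd i (\<lambda>y. inverse (f y)) x = - (pd i f x * (inverse (f x) * inverse (f x)))" by blast
  from D P show "hasd U (\<lambda>y. inverse (f y))" unfolding hasd_def by simp
qed

lemma pd_const_fun: "pd i (\<lambda>y. c) = (\<lambda>y. 0)"
  by (rule ext) (simp add: pd_const)

lemma nsm_const: "nsm U n (\<lambda>y. c)"
  by (induction n arbitrary: c) (auto simp: hasd_const pd_const_fun)

lemma nsm_add:
  assumes "open U" shows "nsm U n f \<Longrightarrow> nsm U n h \<Longrightarrow> nsm U n (\<lambda>y. f y + h y)"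
proof (induction n arbitrary: f h)
  case 0 then show ?case by (auto intro: continuous_on_add hasd_add)
next
  case (Suc n)
  have 0: "nsm U 0 (\<lambda>y. f y + h y)" using Suc.prems by (auto intro: continuous_on_add hasd_add)
  have "nsm U n (pd i (\<lambda>y. f y + h y))" for i
  proof (rule nsm_cong[OF assms, of "\<lambda>y. pd i f y + pd i h y"])
    show "\<forall>y\<in>U. pd i f y + pd i h y = pd i (\<lambda>y. f y + h y) y"
      using hasd_add(2)[of U f h i] Suc.prems by simp
    show "nsm U n (\<lambda>y. pd i f y + pd i h y)" using Suc by simp
  qed
  with 0 show ?case by simp
qed

lemma nsm_mult:
  assumes "open U" shows "nsm U n f \<Longrightarrow> nsm U n h \<Longrightarrow> nsm U n (\<lambda>y. f y * h y)"
proof (induction n arbitrary: f h)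
  case 0 then show ?case by (auto intro: continuous_on_mult hasd_mult)
next
  case (Suc n)
  have 0: "nsm U 0 (\<lambda>y. f y * h y)" using Suc.prems by (auto intro: continuous_on_mult hasd_mult)
  have "nsm U n (pd i (\<lambda>y. f y * h y))" for i
  proof (rule nsm_cong[OF assms, of "\<lambda>y. pd i f y * h y + f y * pd i h y"])
    show "\<forall>y\<in>U. pd i f y * h y + f y * pd i h y = pd i (\<lambda>y. f y * h y) y"
      using hasd_mult(2)[of U f h i] Suc.prems by simp
    have "nsm U n (pd i f)" "nsm U n h" "nsm U n f" "nsm U n (pd i h)"
      using Suc.prems nsm_SucD by auto
    then show "nsm U n (\<lambda>y. pd i f y * h y + f y * pd i h y)"
      using Suc.IH nsm_add[OF assms] by simp
  qed
  with 0 show ?case by simp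
qed

lemma nsm_inverse:
  assumes "open U" "\<forall>y\<in>U. f y \<noteq> 0" shows "nsm U n f \<Longrightarrow> nsm U n (\<lambda>y. inverse (f y))"
proof (induction n)
  case 0
  have "continuous_on U (\<lambda>y. inverse (f y))" using 0 assms(2) by (intro continuous_on_inverse) auto
  moreover have "hasd U (\<lambda>y. inverse (f y))" using 0 assms(2) hasd_inverse(1) by auto
  ultimately show ?case by simp
next
  case (Suc n)
  have 0: "nsm U 0 (\<lambda>y. inverse (f y))"
  proof -
    have "continuous_on U (\<lambda>y. inverse (f y))" using Suc.prems assms(2) by (intro continuous_on_inverse) auto
    moreover have "hasd U (\<lambda>y. inverse (f y))" using Suc.prems assms(2) hasd_inverse(1) by auto
    ultimately show ?thesis by simp
  qed
  have "nsm U n (pd i (\<lambda>y. inverse (f y)))" for i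
  proof (rule nsm_cong[OF assms(1), of "\<lambda>y. (-1) * (pd i f y * (inverse (f y) * inverse (f y)))"])
    show "\<forall>y\<in>U. (-1) * (pd i f y * (inverse (f y) * inverse (f y))) = pd i (\<lambda>y. inverse (f y)) y"
      using hasd_inverse(2)[of U f i] Suc.prems assms(2) by simp
    have 1: "nsm U n (pd i f)" and 2: "nsm U n (\<lambda>y. inverse (f y))"
      using Suc.prems Suc.IH nsm_SucD by auto
    have A: "nsm U n (\<lambda>y. inverse (f y) * inverse (f y))" using nsm_mult[OF assms(1) 2 2] .
    have B: "nsm U n (\<lambda>y. pd i f y * (inverse (f y) * inverse (f y)))" using nsm_mult[OF assms(1) 1 A] .
    show "nsm U n (\<lambda>y. (-1) * (pd i f y * (inverse (f y) * inverse (f y))))"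
      using nsm_mult[OF assms(1) nsm_const[of U n "-1"] B] .
  qed
  with 0 show ?case by simp
qed


lemma sm_hasd: "smooth_on U f \<Longrightarrow> hasd U f"
  using smooth_on_nsm[of U f] nsm_0D by (metis nsm.simps(1))

lemma sm_cont: "smooth_on U f \<Longrightarrow> continuous_on U f"
  using smooth_on_nsm[of U f] nsm_0D by (metis nsm.simps(1))

lemma sm_add: "open U \<Longrightarrow> smooth_on U f \<Longrightarrow> smooth_on U h \<Longrightarrow> smooth_on U (\<lambda>y. f y + h y)"
  by (simp add: smooth_on_nsm nsm_add)

lemma sm_mult: "open U \<Longrightarrow> smooth_on U f \<Longrightarrow> smooth_on U h \<Longrightarrow> smooth_on U (\<lambda>y. f y * h y)"
  by (simp add: smooth_on_nsm nsm_mult)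

lemma sm_const: "smooth_on U (\<lambda>y. c)"
  by (simp add: smooth_on_nsm nsm_const)

lemma sm_inverse: "open U \<Longrightarrow> smooth_on U f \<Longrightarrow> \<forall>y\<in>U. f y \<noteq> 0 \<Longrightarrow> smooth_on U (\<lambda>y. inverse (f y))"
  by (simp add: smooth_on_nsm nsm_inverse)

lemma sm_cong: "open U \<Longrightarrow> \<forall>y\<in>U. f y = h y \<Longrightarrow> smooth_on U f \<Longrightarrow> smooth_on U h"
  using nsm_cong by (metis smooth_on_nsm)

lemma sm_cmult: "open U \<Longrightarrow> smooth_on U f \<Longrightarrow> smooth_on U (\<lambda>y. c * f y)"
  using sm_mult[OF _ sm_const] by blast

lemma sm_minus: "open U \<Longrightarrow> smooth_on U f \<Longrightarrow> smooth_on U (\<lambda>y. - f y)"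
  using sm_cmult[of U f "-1"] by simp

lemma sm_diff: assumes "open U" "smooth_on U f" "smooth_on U h" shows "smooth_on U (\<lambda>y. f y - h y)"
proof -
  have "smooth_on U (\<lambda>y. f y + - h y)" using assms sm_minus by (intro sm_add) auto
  then show ?thesis by simp
qed

lemma sm_divide: "open U \<Longrightarrow> smooth_on U f \<Longrightarrow> smooth_on U h \<Longrightarrow> \<forall>y\<in>U. h y \<noteq> 0 \<Longrightarrow> smooth_on U (\<lambda>y. f y / h y)"
  using sm_mult[OF _ _ sm_inverse, of U f h] by (simp add: divide_inverse)

lemma sm_sum: assumes "open U" shows "finite A \<Longrightarrow> (\<forall>k\<in>A. smooth_on U (F k)) \<Longrightarrow> smooth_on U (\<lambda>y. \<Sum>k\<in>A. F k y)"
proof (induction A rule: finite_induct)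
  case empty then show ?case by (simp add: sm_const)
next
  case (insert a A) then show ?case using sm_add[of U "F a" "\<lambda>y. \<Sum>k\<in>A. F k y"] assms by simp
qed

lemma sm_prod: assumes "open U" shows "finite A \<Longrightarrow> (\<forall>k\<in>A. smooth_on U (F k)) \<Longrightarrow> smooth_on U (\<lambda>y. \<Prod>k\<in>A. F k y)"
proof (induction A rule: finite_induct)
  case empty then show ?case by (simp add: sm_const)
next
  case (insert a A) then show ?case using sm_mult[of U "F a" "\<lambda>y. \<Prod>k\<in>A. F k y"] assms by simp
qed

lemma sm_if: "smooth_on U f \<Longrightarrow> smooth_on U h \<Longrightarrow> smooth_on U (\<lambda>y. if P then f y else h y)"
  by (cases P) auto

lemma pd_add: "x \<in> U \<Longrightarrow> smooth_on U f \<Longrightarrow> smooth_on U h \<Longrightarrow> pd i (\<lambda>y. f y + h y) x = pd i f x + pd i h x"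
  using hasd_add(2)[OF sm_hasd sm_hasd] by blast

lemma pd_mult: "x \<in> U \<Longrightarrow> smooth_on U f \<Longrightarrow> smooth_on U h \<Longrightarrow> pd i (\<lambda>y. f y * h y) x = pd i f x * h x + f x * pd i h x"
  using hasd_mult(2)[OF sm_hasd sm_hasd] by blast

lemma pd_cmult: "x \<in> U \<Longrightarrow> smooth_on U f \<Longrightarrow> pd i (\<lambda>y. c * f y) x = c * pd i f x"
  using pd_mult[OF _ sm_const, of x U f i c] by (simp add: pd_const)

lemma pd_minus: "x \<in> U \<Longrightarrow> smooth_on U f \<Longrightarrow> pd i (\<lambda>y. - f y) x = - pd i f x"
  using pd_cmult[of x U f i "-1"] by simp

lemma pd_diff: "open U \<Longrightarrow> x \<in> U \<Longrightarrow> smooth_on U f \<Longrightarrow> smooth_on U h \<Longrightarrow> pd i (\<lambda>y. f y - h y) x = pd i f x - pd i h x"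
  using pd_add[of x U f "\<lambda>y. - h y" i] pd_minus[of x U h i] sm_minus[of U h] by simp

lemma pd_sum: assumes "open U" "x \<in> U" shows "finite A \<Longrightarrow> (\<forall>k\<in>A. smooth_on U (F k)) \<Longrightarrow>
    pd i (\<lambda>y. \<Sum>k\<in>A. F k y) x = (\<Sum>k\<in>A. pd i (F k) x)"
proof (induction A rule: finite_induct)
  case empty then show ?case by (simp add: pd_const)
next
  case (insert a A)
  have "pd i (\<lambda>y. \<Sum>k\<in>insert a A. F k y) x = pd i (\<lambda>y. F a y + (\<Sum>k\<in>A. F k y)) x"
    using insert by simp
  also have "\<dots> = pd i (F a) x + pd i (\<lambda>y. \<Sum>k\<in>A. F k y) x"
    using insert sm_sum[of U A F] assms by (intro pd_add) auto
  finally show ?case using insert by simp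
qed

subsection \<open>Symmetry of mixed partials\<close>

lemma line_deriv:
  assumes "hasd U f" "p + t0 *\<^sub>R axis i 1 \<in> U"
  shows "((\<lambda>t. f (p + t *\<^sub>R axis i 1)) has_real_derivative pd i f (p + t0 *\<^sub>R axis i 1)) (at t0)"
proof -
  let ?e = "axis i 1 :: real^'a"
  have D: "((\<lambda>s. f ((p + t0 *\<^sub>R ?e) + s *\<^sub>R ?e)) has_real_derivative pd i f (p + t0 *\<^sub>R ?e)) (at 0)"
    using assms unfolding hasd_def by blast
  have "(\<lambda>s. f ((p + t0 *\<^sub>R ?e) + s *\<^sub>R ?e)) = (\<lambda>s. f (p + (s + t0) *\<^sub>R ?e))"
    by (rule ext) (simp add: scaleR_add_left algebra_simps)
  with D have "((\<lambda>s. f (p + (s + t0) *\<^sub>R ?e)) has_real_derivative pd i f (p + t0 *\<^sub>R ?e)) (at 0)" by simp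
  then show ?thesis using DERIV_shift[of "\<lambda>t. f (p + t *\<^sub>R ?e)" _ 0 t0] by simp
qed

lemma mixed_mvt:
  fixes x :: "real^'n::finite"
  assumes "smooth_on U f" "h > 0"
    and inU: "\<And>t s. 0 \<le> t \<Longrightarrow> t \<le> h \<Longrightarrow> 0 \<le> s \<Longrightarrow> s \<le> h \<Longrightarrow> x + t *\<^sub>R axis i 1 + s *\<^sub>R axis j 1 \<in> U"
  shows "\<exists>t s. 0 < t \<and> t < h \<and> 0 < s \<and> s < h \<and>
     f (x + h *\<^sub>R axis i 1 + h *\<^sub>R axis j 1) - f (x + h *\<^sub>R axis i 1) - f (x + h *\<^sub>R axis j 1) + f x
       = h * h * pd j (pd i f) (x + t *\<^sub>R axis i 1 + s *\<^sub>R axis j 1)"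
proof -
  let ?ei = "axis i 1 :: real^'n" and ?ej = "axis j 1 :: real^'n"
  have hf: "hasd U f" and hf1: "hasd U (pd i f)" using assms(1) sm_hasd smooth_on_pd by blast+
  define \<phi> where "\<phi> t = f ((x + h *\<^sub>R ?ej) + t *\<^sub>R ?ei) - f (x + t *\<^sub>R ?ei)" for t
  have "\<exists>t1. 0 < t1 \<and> t1 < h \<and> \<phi> h - \<phi> 0 = (h - 0) * (pd i f ((x + h *\<^sub>R ?ej) + t1 *\<^sub>R ?ei) - pd i f (x + t1 *\<^sub>R ?ei))"
    unfolding \<phi>_def
  proof (rule MVT2[OF assms(2)])
    fix t :: real assume t: "0 \<le> t" "t \<le> h"
    have 1: "(x + h *\<^sub>R ?ej) + t *\<^sub>R ?ei \<in> U" using inU[of t h] t assms(2) by (simp add: algebra_simps)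
    have 2: "x + t *\<^sub>R ?ei \<in> U" using inU[of t 0] t by simp
    show "((\<lambda>t. f ((x + h *\<^sub>R ?ej) + t *\<^sub>R ?ei) - f (x + t *\<^sub>R ?ei)) has_real_derivative
        pd i f ((x + h *\<^sub>R ?ej) + t *\<^sub>R ?ei) - pd i f (x + t *\<^sub>R ?ei)) (at t)"
      by (intro DERIV_diff line_deriv[OF hf] 1 2)
  qed
  then obtain t1 where t1: "0 < t1" "t1 < h"
    and E1: "\<phi> h - \<phi> 0 = h * (pd i f ((x + h *\<^sub>R ?ej) + t1 *\<^sub>R ?ei) - pd i f (x + t1 *\<^sub>R ?ei))" by auto
  have "\<exists>s1. 0 < s1 \<and> s1 < h \<and> pd i f ((x + t1 *\<^sub>R ?ei) + h *\<^sub>R ?ej) - pd i f ((x + t1 *\<^sub>R ?ei) + 0 *\<^sub>R ?ej)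
       = (h - 0) * pd j (pd i f) ((x + t1 *\<^sub>R ?ei) + s1 *\<^sub>R ?ej)"
  proof (rule MVT2[OF assms(2)])
    fix s :: real assume s: "0 \<le> s" "s \<le> h"
    have 1: "(x + t1 *\<^sub>R ?ei) + s *\<^sub>R ?ej \<in> U" using inU[of t1 s] s t1 by simp
    show "((\<lambda>s. pd i f ((x + t1 *\<^sub>R ?ei) + s *\<^sub>R ?ej)) has_real_derivative pd j (pd i f) ((x + t1 *\<^sub>R ?ei) + s *\<^sub>R ?ej)) (at s)"
      by (intro line_deriv[OF hf1] 1)
  qed
  then obtain s1 where s1: "0 < s1" "s1 < h"
    and E2: "pd i f ((x + t1 *\<^sub>R ?ei) + h *\<^sub>R ?ej) - pd i f ((x + t1 *\<^sub>R ?ei) + 0 *\<^sub>R ?ej)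
       = h * pd j (pd i f) ((x + t1 *\<^sub>R ?ei) + s1 *\<^sub>R ?ej)" by auto
  have "(x + h *\<^sub>R ?ej) + t1 *\<^sub>R ?ei = (x + t1 *\<^sub>R ?ei) + h *\<^sub>R ?ej" by (simp add: algebra_simps)
  with E1 E2 have "\<phi> h - \<phi> 0 = h * h * pd j (pd i f) (x + t1 *\<^sub>R ?ei + s1 *\<^sub>R ?ej)" by simp
  moreover have "\<phi> h - \<phi> 0 = f (x + h *\<^sub>R ?ei + h *\<^sub>R ?ej) - f (x + h *\<^sub>R ?ei) - f (x + h *\<^sub>R ?ej) + f x"
    unfolding \<phi>_def by (simp add: algebra_simps)
  ultimately show ?thesis using t1 s1 by metis
qed

lemma pd_comm:
  fixes x :: "real^'n::finite"
  assumes "open U" "smooth_on U f" "x \<in> U"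
  shows "pd i (pd j f) x = pd j (pd i f) x"
proof (rule ccontr)
  let ?ei = "axis i 1 :: real^'n" and ?ej = "axis j 1 :: real^'n"
  let ?A = "pd j (pd i f) x" and ?B = "pd i (pd j f) x"
  assume ne: "?B \<noteq> ?A"
  define e where "e = \<bar>?A - ?B\<bar> / 2"
  have e: "e > 0" using ne by (simp add: e_def)
  have sm1: "smooth_on U (pd j (pd i f))" "smooth_on U (pd i (pd j f))"
    using assms(2) smooth_on_pd by blast+
  have c1: "isCont (pd j (pd i f)) x" "isCont (pd i (pd j f)) x"
    using sm_cont[OF sm1(1)] sm_cont[OF sm1(2)] assms(1,3) continuous_on_eq_continuous_at by blast+
  obtain d1 where d1: "d1 > 0" "\<forall>y. norm (y - x) < d1 \<longrightarrow> \<bar>pd j (pd i f) y - ?A\<bar> < e"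
  proof -
    from c1(1) have "\<forall>r>0. \<exists>s>0. \<forall>y. y \<noteq> x \<and> norm (y - x) < s \<longrightarrow> norm (pd j (pd i f) y - ?A) < r"
      unfolding isCont_def LIM_eq by blast
    with e obtain s where "s > 0" "\<forall>y. y \<noteq> x \<and> norm (y - x) < s \<longrightarrow> norm (pd j (pd i f) y - ?A) < e" by blast
    then show ?thesis using that[of s] e by (metis abs_zero cancel_comm_monoid_add_class.diff_cancel real_norm_def)
  qed
  obtain d2 where d2: "d2 > 0" "\<forall>y. norm (y - x) < d2 \<longrightarrow> \<bar>pd i (pd j f) y - ?B\<bar> < e"
  proof -
    from c1(2) have "\<forall>r>0. \<exists>s>0. \<forall>y. y \<noteq> x \<and> norm (y - x) < s \<longrightarrow> norm (pd i (pd j f) y - ?B) < r"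
      unfolding isCont_def LIM_eq by blast
    with e obtain s where "s > 0" "\<forall>y. y \<noteq> x \<and> norm (y - x) < s \<longrightarrow> norm (pd i (pd j f) y - ?B) < e" by blast
    then show ?thesis using that[of s] e by (metis abs_zero cancel_comm_monoid_add_class.diff_cancel real_norm_def)
  qed
  obtain d0 where d0: "d0 > 0" "ball x d0 \<subseteq> U" using assms(1,3) open_contains_ball by blast
  define d where "d = min d0 (min d1 d2)"
  have d: "d > 0" "d \<le> d0" "d \<le> d1" "d \<le> d2" using d0 d1 d2 by (auto simp: d_def)
  define h where "h = d / 3"
  have h: "h > 0" using d by (simp add: h_def)
  have near: "norm ((x + t *\<^sub>R axis a 1 + s *\<^sub>R axis b 1) - x) < d" if "0 \<le> t" "t \<le> h" "0 \<le> s" "s \<le> h" for t s a b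
  proof -
    have "norm ((x + t *\<^sub>R axis a 1 + s *\<^sub>R axis b 1) - x) = norm (t *\<^sub>R (axis a 1 :: real^'n) + s *\<^sub>R axis b 1)"
      by (simp add: algebra_simps)
    also have "\<dots> \<le> norm (t *\<^sub>R (axis a 1 :: real^'n)) + norm (s *\<^sub>R (axis b 1 :: real^'n))" by (rule norm_triangle_ineq)
    also have "\<dots> = t + s" using that by simp
    also have "\<dots> < d" using that d by (simp add: h_def)
    finally show ?thesis .
  qed
  have inU: "x + t *\<^sub>R axis a 1 + s *\<^sub>R axis b 1 \<in> U" if "0 \<le> t" "t \<le> h" "0 \<le> s" "s \<le> h" for t s a b
  proof -
    have "dist x (x + t *\<^sub>R axis a 1 + s *\<^sub>R axis b 1) = norm ((x + t *\<^sub>R axis a 1 + s *\<^sub>R axis b 1) - x)"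
      by (simp add: dist_norm norm_minus_commute add.commute)
    then have "dist x (x + t *\<^sub>R axis a 1 + s *\<^sub>R axis b 1) < d0" using near[OF that, of a b] d by linarith
    then show ?thesis using d0 by auto
  qed
  obtain t1 s1 where ts1: "0 < t1" "t1 < h" "0 < s1" "s1 < h"
    and E1: "f (x + h *\<^sub>R ?ei + h *\<^sub>R ?ej) - f (x + h *\<^sub>R ?ei) - f (x + h *\<^sub>R ?ej) + f x
       = h * h * pd j (pd i f) (x + t1 *\<^sub>R ?ei + s1 *\<^sub>R ?ej)"
    using mixed_mvt[OF assms(2) h, of x i j] inU by blast
  obtain t2 s2 where ts2: "0 < t2" "t2 < h" "0 < s2" "s2 < h"
    and E2: "f (x + h *\<^sub>R ?ej + h *\<^sub>R ?ei) - f (x + h *\<^sub>R ?ej) - f (x + h *\<^sub>R ?ei) + f x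
       = h * h * pd i (pd j f) (x + t2 *\<^sub>R ?ej + s2 *\<^sub>R ?ei)"
    using mixed_mvt[OF assms(2) h, of x j i] inU by blast
  have "x + h *\<^sub>R ?ej + h *\<^sub>R ?ei = x + h *\<^sub>R ?ei + h *\<^sub>R ?ej" by (simp add: algebra_simps)
  have e': "f (x + h *\<^sub>R ?ej + h *\<^sub>R ?ei) = f (x + h *\<^sub>R ?ei + h *\<^sub>R ?ej)"
    by (rule arg_cong[where f=f]) (simp add: algebra_simps)
  from E1 E2 e' have "h * h * pd j (pd i f) (x + t1 *\<^sub>R ?ei + s1 *\<^sub>R ?ej) = h * h * pd i (pd j f) (x + t2 *\<^sub>R ?ej + s2 *\<^sub>R ?ei)"
    by linarith
  with h have eq: "pd j (pd i f) (x + t1 *\<^sub>R ?ei + s1 *\<^sub>R ?ej) = pd i (pd j f) (x + t2 *\<^sub>R ?ej + s2 *\<^sub>R ?ei)"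
    by simp
  have a1: "\<bar>pd j (pd i f) (x + t1 *\<^sub>R ?ei + s1 *\<^sub>R ?ej) - ?A\<bar> < e"
    using d1(2) near[of t1 s1 i j] ts1 d by force
  have a2: "\<bar>pd i (pd j f) (x + t2 *\<^sub>R ?ej + s2 *\<^sub>R ?ei) - ?B\<bar> < e"
    using d2(2) near[of t2 s2 j i] ts2 d by force
  from a1 a2 eq have "\<bar>?A - ?B\<bar> < 2 * e" by linarith
  then show False by (simp add: e_def)
qed


lemma delta_sum1[simp]: "(\<Sum>l\<in>(UNIV::'a::finite set). (if c = l then 1 else (0::real)) * f l) = f c"
proof -
  have "(\<Sum>l\<in>UNIV. (if c = l then 1 else (0::real)) * f l) = (\<Sum>l\<in>UNIV. if l = c then f l else 0)"
    by (rule sum.cong) auto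
  then show ?thesis by simp
qed

lemma delta_sum2[simp]: "(\<Sum>l\<in>(UNIV::'a::finite set). (if l = c then 1 else (0::real)) * f l) = f c"
proof -
  have "(\<Sum>l\<in>UNIV. (if l = c then 1 else (0::real)) * f l) = (\<Sum>l\<in>UNIV. if l = c then f l else 0)"
    by (rule sum.cong) auto
  then show ?thesis by simp
qed

lemma delta_sum3[simp]: "(\<Sum>l\<in>(UNIV::'a::finite set). f l * (if c = l then 1 else (0::real))) = f c"
proof -
  have "(\<Sum>l\<in>UNIV. f l * (if c = l then 1 else (0::real))) = (\<Sum>l\<in>UNIV. if l = c then f l else 0)"
    by (rule sum.cong) auto
  then show ?thesis by simp
qed

lemma delta_sum4[simp]: "(\<Sum>l\<in>(UNIV::'a::finite set). f l * (if l = c then 1 else (0::real))) = f c"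
proof -
  have "(\<Sum>l\<in>UNIV. f l * (if l = c then 1 else (0::real))) = (\<Sum>l\<in>UNIV. if l = c then f l else 0)"
    by (rule sum.cong) auto
  then show ?thesis by simp
qed

locale geo =
  fixes U :: "(real^'n::finite) set" and g :: "real^'n \<Rightarrow> real^'n^'n"
  assumes U_open: "open U"
    and g_sm0: "\<forall>i j. smooth_on U (\<lambda>x. g x $ i $ j)"
    and g_sym0: "\<forall>x\<in>U. \<forall>i j. g x $ i $ j = g x $ j $ i"
    and g_inv0: "\<forall>x\<in>U. invertible (g x)"
begin

abbreviation sm :: "(real^'n \<Rightarrow> real) \<Rightarrow> bool" where "sm f \<equiv> smooth_on U f"

lemma g_sm[simp]: "sm (\<lambda>x. g x $ i $ j)" using g_sm0 by blast
lemma g_sym: "x \<in> U \<Longrightarrow> g x $ i $ j = g x $ j $ i" using g_sym0 by blast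
lemma g_inv: "x \<in> U \<Longrightarrow> invertible (g x)" using g_inv0 by blast

lemma sm_add'[simp]: "sm f \<Longrightarrow> sm h \<Longrightarrow> sm (\<lambda>y. f y + h y)" using sm_add U_open by blast
lemma sm_mult'[simp]: "sm f \<Longrightarrow> sm h \<Longrightarrow> sm (\<lambda>y. f y * h y)" using sm_mult U_open by blast
lemma sm_diff'[simp]: "sm f \<Longrightarrow> sm h \<Longrightarrow> sm (\<lambda>y. f y - h y)" using sm_diff U_open by blast
lemma sm_minus'[simp]: "sm f \<Longrightarrow> sm (\<lambda>y. - f y)" using sm_minus U_open by blast
lemma sm_const'[simp]: "sm (\<lambda>y. c)" using sm_const by blast
lemma sm_sum'[simp]: "(\<And>k. sm (F k)) \<Longrightarrow> sm (\<lambda>y. \<Sum>k\<in>(A::'n set). F k y)"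
  by (rule sm_sum[OF U_open]) (auto simp: finite)
lemma sm_sum_nat[simp]: "(\<And>k. sm (F k)) \<Longrightarrow> sm (\<lambda>y. \<Sum>k<(m::nat). F k y)"
  by (rule sm_sum[OF U_open]) auto
lemma sm_divc[simp]: "sm f \<Longrightarrow> sm (\<lambda>y. f y / c)"
  using sm_mult'[of f "\<lambda>y. inverse c"] by (simp add: divide_inverse)
lemma sm_pd'[simp]: "sm f \<Longrightarrow> sm (pd i f)" using smooth_on_pd by blast
lemma sm_if'[simp]: "sm f \<Longrightarrow> sm h \<Longrightarrow> sm (\<lambda>y. if P then f y else h y)" by (cases P) auto

lemma pd_add'[simp]: "x \<in> U \<Longrightarrow> sm f \<Longrightarrow> sm h \<Longrightarrow> pd i (\<lambda>y. f y + h y) x = pd i f x + pd i h x"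
  using pd_add by blast
lemma pd_mult'[simp]: "x \<in> U \<Longrightarrow> sm f \<Longrightarrow> sm h \<Longrightarrow> pd i (\<lambda>y. f y * h y) x = pd i f x * h x + f x * pd i h x"
  using pd_mult by blast
lemma pd_diff'[simp]: "x \<in> U \<Longrightarrow> sm f \<Longrightarrow> sm h \<Longrightarrow> pd i (\<lambda>y. f y - h y) x = pd i f x - pd i h x"
  using pd_diff U_open by blast
lemma pd_minus'[simp]: "x \<in> U \<Longrightarrow> sm f \<Longrightarrow> pd i (\<lambda>y. - f y) x = - pd i f x"
  using pd_minus by blast
lemma pd_sum'[simp]: "x \<in> U \<Longrightarrow> (\<And>k. sm (F k)) \<Longrightarrow> pd i (\<lambda>y. \<Sum>k\<in>(A::'n set). F k y) x = (\<Sum>k\<in>A. pd i (F k) x)"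
  by (rule pd_sum[OF U_open]) (auto simp: finite)
lemma pd_sum_nat[simp]: "x \<in> U \<Longrightarrow> (\<And>k. sm (F k)) \<Longrightarrow> pd i (\<lambda>y. \<Sum>k<(m::nat). F k y) x = (\<Sum>k<m. pd i (F k) x)"
  by (rule pd_sum[OF U_open]) auto
lemma pd_divc[simp]: "x \<in> U \<Longrightarrow> sm f \<Longrightarrow> pd i (\<lambda>y. f y / c) x = pd i f x / c"
  using pd_mult'[of x f "\<lambda>y. inverse c" i] by (simp add: divide_inverse pd_const)
lemma pd_const'[simp]: "pd i (\<lambda>y. c) x = 0" by (rule pd_const)
lemma pd_if[simp]: "pd i (\<lambda>y. if P then f y else h y) x = (if P then pd i f x else pd i h x)" by (cases P) auto

lemma pd_loc: "x \<in> U \<Longrightarrow> (\<And>y. y \<in> U \<Longrightarrow> f y = h y) \<Longrightarrow> pd i f x = pd i h x"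
  using pd_local[OF U_open] by blast

lemma pd_swap: "x \<in> U \<Longrightarrow> sm f \<Longrightarrow> pd i (pd j f) x = pd j (pd i f) x"
  using pd_comm[OF U_open] by blast

subsection \<open>Inverse metric\<close>

lemma ginv_mats:
  assumes "x \<in> U" shows "g x ** ginv g x = mat 1" "ginv g x ** g x = mat 1"
proof -
  have "\<exists>A'. g x ** A' = mat 1 \<and> A' ** g x = mat 1" using g_inv[OF assms] unfolding invertible_def .
  then have "g x ** matrix_inv (g x) = mat 1 \<and> matrix_inv (g x) ** g x = mat 1"
    unfolding matrix_inv_def by (rule someI_ex)
  then show "g x ** ginv g x = mat 1" "ginv g x ** g x = mat 1" by (auto simp: ginv_def)
qed

lemma ginv_right: "x \<in> U \<Longrightarrow> (\<Sum>k\<in>UNIV. g x $ i $ k * ginv g x $ k $ j) = (if i = j then 1 else 0)"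
  using ginv_mats(1)[of x] by (simp add: vec_eq_iff matrix_matrix_mult_def mat_def)

lemma ginv_left: "x \<in> U \<Longrightarrow> (\<Sum>k\<in>UNIV. ginv g x $ i $ k * g x $ k $ j) = (if i = j then 1 else 0)"
  using ginv_mats(2)[of x] by (simp add: vec_eq_iff matrix_matrix_mult_def mat_def)

lemma ginv_sym: assumes "x \<in> U" shows "ginv g x $ i $ j = ginv g x $ j $ i"
proof -
  have tg: "transpose (g x) = g x" using g_sym[OF assms] by (simp add: vec_eq_iff transpose_def)
  have h1: "transpose (ginv g x) ** g x = mat 1"
  proof -
    have "transpose (ginv g x) ** g x = transpose (ginv g x) ** transpose (g x)" by (simp only: tg)
    also have "\<dots> = transpose (g x ** ginv g x)" by (simp only: matrix_transpose_mul)
    also have "\<dots> = mat 1" by (simp only: ginv_mats(1)[OF assms] transpose_mat)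
    finally show ?thesis .
  qed
  have "transpose (ginv g x) = transpose (ginv g x) ** (g x ** ginv g x)" by (simp only: ginv_mats(1)[OF assms] matrix_mul_rid)
  also have "\<dots> = (transpose (ginv g x) ** g x) ** ginv g x" by (simp only: matrix_mul_assoc)
  also have "\<dots> = ginv g x" by (simp only: h1 matrix_mul_lid)
  finally have "transpose (ginv g x) $ i $ j = ginv g x $ i $ j" by simp
  then show ?thesis by (simp add: transpose_def)
qed

lemma det_sm: fixes M :: "real^'n \<Rightarrow> real^'n^'n"
  assumes A: "\<And>a b. sm (\<lambda>y. M y $ a $ b)" shows "sm (\<lambda>y. det (M y))"
proof -
  have P: "sm (\<lambda>y. of_int (sign p) * (\<Prod>i\<in>UNIV. M y $ i $ p i))" for p :: "'n \<Rightarrow> 'n"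
  proof (rule sm_mult'[OF sm_const'])
    show "sm (\<lambda>y. \<Prod>i\<in>UNIV. M y $ i $ p i)" by (rule sm_prod[OF U_open]) (simp_all add: A)
  qed
  have "sm (\<lambda>y. \<Sum>p\<in>{p. p permutes (UNIV::'n set)}. of_int (sign p) * (\<Prod>i\<in>UNIV. M y $ i $ p i))"
    by (rule sm_sum[OF U_open]) (simp_all add: finite_permutations P)
  then show ?thesis unfolding det_def .
qed

lemma ginv_cramer:
  assumes "x \<in> U"
  shows "ginv g x $ i $ j = det (\<chi> a c. if c = i then axis j 1 $ a else g x $ a $ c) / det (g x)"
proof -
  have d: "det (g x) \<noteq> 0" using g_inv[OF assms] invertible_det_nz by blast
  have "(g x *v (\<chi> k. ginv g x $ k $ j)) $ a = axis j 1 $ a" for a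
  proof -
    have "(g x *v (\<chi> k. ginv g x $ k $ j)) $ a = (\<Sum>k\<in>UNIV. g x $ a $ k * ginv g x $ k $ j)"
      by (simp add: matrix_vector_mult_def)
    also have "\<dots> = (if a = j then 1 else 0)" by (rule ginv_right[OF assms])
    also have "\<dots> = axis j 1 $ a" by (simp add: axis_def)
    finally show ?thesis .
  qed
  then have "g x *v (\<chi> k. ginv g x $ k $ j) = axis j 1" by (simp add: vec_eq_iff)
  then have "(\<chi> k. ginv g x $ k $ j) = (\<chi> k. det (\<chi> a c. if c = k then axis j 1 $ a else g x $ a $ c) / det (g x))"
    using cramer[OF d] by blast
  then have "(\<chi> k. ginv g x $ k $ j) $ i = (\<chi> k. det (\<chi> a c. if c = k then axis j 1 $ a else g x $ a $ c) / det (g x)) $ i"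
    by (rule arg_cong)
  then show ?thesis by simp
qed

lemma ginv_sm[simp]: "sm (\<lambda>y. ginv g y $ i $ j)"
proof (rule sm_cong[OF U_open])
  show "\<forall>y\<in>U. det (\<chi> a c. if c = i then axis j 1 $ a else g y $ a $ c) / det (g y) = ginv g y $ i $ j"
  proof
    fix y assume "y \<in> U"
    then show "det (\<chi> a c. if c = i then axis j 1 $ a else g y $ a $ c) / det (g y) = ginv g y $ i $ j"
      by (rule ginv_cramer[symmetric])
  qed
  have nz: "\<forall>y\<in>U. det (g y) \<noteq> 0" using g_inv invertible_det_nz by blast
  have e: "sm (\<lambda>y. (\<chi> a c. if c = i then axis j 1 $ a else g y $ a $ c) $ a $ b)" for a b
    by simp
  have "sm (\<lambda>y. det (\<chi> a c. if c = i then axis j 1 $ a else g y $ a $ c))"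
    by (rule det_sm) (rule e)
  moreover have "sm (\<lambda>y. det (g y))" by (rule det_sm) simp
  ultimately show "sm (\<lambda>y. det (\<chi> a c. if c = i then axis j 1 $ a else g y $ a $ c) / det (g y))"
    using sm_divide[OF U_open] nz by blast
qed

lemma chr_sm[simp]: "sm (\<lambda>y. chr g y k i j)"
  unfolding chr_def by simp

lemma pd_g_sym: "x \<in> U \<Longrightarrow> pd c (\<lambda>y. g y $ i $ j) x = pd c (\<lambda>y. g y $ j $ i) x"
  by (rule pd_loc) (auto simp: g_sym)

lemma chr_sym: "x \<in> U \<Longrightarrow> chr g x k i j = chr g x k j i"
  unfolding chr_def by (simp add: pd_g_sym[of x _ i j] add.commute)

lemma pd_chr_sym: "x \<in> U \<Longrightarrow> pd c (\<lambda>y. chr g y k i j) x = pd c (\<lambda>y. chr g y k j i) x"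
  by (rule pd_loc) (auto simp: chr_sym)

lemma chr_low: assumes "x \<in> U"
  shows "(\<Sum>d\<in>UNIV. g x $ c $ d * chr g x d a b) =
     (pd a (\<lambda>y. g y $ b $ c) x + pd b (\<lambda>y. g y $ a $ c) x - pd c (\<lambda>y. g y $ a $ b) x) / 2"
proof -
  let ?P = "\<lambda>l. pd a (\<lambda>y. g y $ b $ l) x + pd b (\<lambda>y. g y $ a $ l) x - pd l (\<lambda>y. g y $ a $ b) x"
  have "(\<Sum>d\<in>UNIV. g x $ c $ d * chr g x d a b) = (\<Sum>d\<in>UNIV. \<Sum>l\<in>UNIV. g x $ c $ d * ginv g x $ d $ l * ?P l) / 2"
    unfolding chr_def by (simp add: sum_distrib_left sum_divide_distrib mult.assoc)
  also have "\<dots> = (\<Sum>l\<in>UNIV. (\<Sum>d\<in>UNIV. g x $ c $ d * ginv g x $ d $ l) * ?P l) / 2"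
    by (subst sum.swap) (simp add: sum_distrib_right)
  also have "\<dots> = (\<Sum>l\<in>UNIV. (if c = l then 1 else 0) * ?P l) / 2" by (simp only: ginv_right[OF assms])
  also have "\<dots> = ?P c / 2" by (simp only: delta_sum1)
  finally show ?thesis .
qed

lemma dg: assumes "x \<in> U"
  shows "pd c (\<lambda>y. g y $ a $ b) x = (\<Sum>d\<in>UNIV. chr g x d c a * g x $ d $ b) + (\<Sum>d\<in>UNIV. chr g x d c b * g x $ a $ d)"
proof -
  have 1: "(\<Sum>d\<in>UNIV. chr g x d c a * g x $ d $ b) = (\<Sum>d\<in>UNIV. g x $ b $ d * chr g x d c a)"
    using g_sym[OF assms] by (simp add: mult.commute)
  have 2: "(\<Sum>d\<in>UNIV. chr g x d c b * g x $ a $ d) = (\<Sum>d\<in>UNIV. g x $ a $ d * chr g x d c b)"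
    by (simp add: mult.commute)
  show ?thesis unfolding 1 2 chr_low[OF assms]
    using pd_g_sym[OF assms, of c a b] pd_g_sym[OF assms, of a b c] pd_g_sym[OF assms, of b a c]
      pd_g_sym[OF assms, of a c b] pd_g_sym[OF assms, of b c a]
    by (simp add: field_simps)
qed

end


context geo
begin

definition smT :: "('n list \<Rightarrow> real^'n \<Rightarrow> real) \<Rightarrow> bool" where
  "smT T \<longleftrightarrow> (\<forall>js. sm (T js))"

lemma smT_D[simp]: "smT T \<Longrightarrow> sm (T js)" by (simp add: smT_def)

lemma covD_Cons: "covD g vs T (c # js) = (\<lambda>x. pd c (T js) x + (\<Sum>p<length vs. \<Sum>d\<in>UNIV.
        (if vs ! p then chr g x (js ! p) c d * T (js[p := d]) x
         else - chr g x d c (js ! p) * T (js[p := d]) x)))"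
  by (rule ext) (simp add: covD_def)

lemma covD_Nil: "covD g vs T [] = (\<lambda>x. 0)"
  by (rule ext) (simp add: covD_def)

lemma smT_covD[simp]: "smT T \<Longrightarrow> smT (covD g vs T)"
  unfolding smT_def
proof
  fix js assume T: "\<forall>js. sm (T js)"
  show "sm (covD g vs T js)"
  proof (cases js)
    case Nil then show ?thesis by (simp add: covD_Nil)
  next
    case (Cons c js') then show ?thesis using T by (simp add: covD_Cons)
  qed
qed

lemma covD0: "covD g [] T [c] = pd c (T [])"
  by (rule ext) (simp add: covD_def)

lemma covD_F: "covD g [False] T [c, a] = (\<lambda>x. pd c (T [a]) x - (\<Sum>d\<in>UNIV. chr g x d c a * T [d] x))"
  by (rule ext) (simp add: covD_def sum_negf)

lemma covD_T: "covD g [True] T [c, a] = (\<lambda>x. pd c (T [a]) x + (\<Sum>d\<in>UNIV. chr g x a c d * T [d] x))"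
  by (rule ext) (simp add: covD_def)

lemma covD_FF: "covD g [False, False] T [c, a, b] = (\<lambda>x. pd c (T [a, b]) x
    - (\<Sum>d\<in>UNIV. chr g x d c a * T [d, b] x) - (\<Sum>d\<in>UNIV. chr g x d c b * T [a, d] x))"
  by (rule ext) (simp add: covD_def sum_negf numeral_2_eq_2 sum.lessThan_Suc_shift)

lemma covD_FT: "covD g [False, True] T [c, a, b] = (\<lambda>x. pd c (T [a, b]) x
    - (\<Sum>d\<in>UNIV. chr g x d c a * T [d, b] x) + (\<Sum>d\<in>UNIV. chr g x b c d * T [a, d] x))"
  by (rule ext) (simp add: covD_def sum_negf numeral_2_eq_2 sum.lessThan_Suc_shift)

lemma covD_TT: "covD g [True, True] T [c, a, b] = (\<lambda>x. pd c (T [a, b]) x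
    + (\<Sum>d\<in>UNIV. chr g x a c d * T [d, b] x) + (\<Sum>d\<in>UNIV. chr g x b c d * T [a, d] x))"
  by (rule ext) (simp add: covD_def sum_negf numeral_2_eq_2 sum.lessThan_Suc_shift)

lemma covD_FFF: "covD g [False, False, False] T [c, a, b, e] = (\<lambda>x. pd c (T [a, b, e]) x
    - (\<Sum>d\<in>UNIV. chr g x d c a * T [d, b, e] x) - (\<Sum>d\<in>UNIV. chr g x d c b * T [a, d, e] x)
    - (\<Sum>d\<in>UNIV. chr g x d c e * T [a, b, d] x))"
  by (rule ext) (simp add: covD_def sum_negf eval_nat_numeral sum.lessThan_Suc_shift)

lemma covD_FFT: "covD g [False, False, True] T [c, a, b, e] = (\<lambda>x. pd c (T [a, b, e]) x
    - (\<Sum>d\<in>UNIV. chr g x d c a * T [d, b, e] x) - (\<Sum>d\<in>UNIV. chr g x d c b * T [a, d, e] x)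
    + (\<Sum>d\<in>UNIV. chr g x e c d * T [a, b, d] x))"
  by (rule ext) (simp add: covD_def sum_negf eval_nat_numeral sum.lessThan_Suc_shift)

lemma covD_FFFT: "covD g [False, False, False, True] T [c, a, b, e, f] = (\<lambda>x. pd c (T [a, b, e, f]) x
    - (\<Sum>d\<in>UNIV. chr g x d c a * T [d, b, e, f] x) - (\<Sum>d\<in>UNIV. chr g x d c b * T [a, d, e, f] x)
    - (\<Sum>d\<in>UNIV. chr g x d c e * T [a, b, d, f] x) + (\<Sum>d\<in>UNIV. chr g x f c d * T [a, b, e, d] x))"
  by (rule ext) (simp add: covD_def sum_negf eval_nat_numeral sum.lessThan_Suc_shift)

lemma covD_FFFF: "covD g [False, False, False, False] T [c, a, b, e, f] = (\<lambda>x. pd c (T [a, b, e, f]) x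
    - (\<Sum>d\<in>UNIV. chr g x d c a * T [d, b, e, f] x) - (\<Sum>d\<in>UNIV. chr g x d c b * T [a, d, e, f] x)
    - (\<Sum>d\<in>UNIV. chr g x d c e * T [a, b, d, f] x) - (\<Sum>d\<in>UNIV. chr g x d c f * T [a, b, e, d] x))"
  by (rule ext) (simp add: covD_def sum_negf eval_nat_numeral sum.lessThan_Suc_shift)

subsection \<open>Ricci identity for one-forms\<close>

lemma riem_sm[simp]: "sm (\<lambda>y. riem g y a b c d)"
  unfolding riem_def by simp

lemma ricci1:
  assumes x: "x \<in> U" and w: "smT w"
  shows "covD g [False, False] (covD g [False] w) [a, b, c] x - covD g [False, False] (covD g [False] w) [b, a, c] x
     = (\<Sum>d\<in>UNIV. riem g x a b c d * w [d] x)"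
  using x w
  apply (simp add: covD_FF covD_F riem_def pd_swap[of x "w [c]" a b] algebra_simps sum_subtractf sum.distrib sum_distrib_left sum_distrib_right chr_sym[of x])
  apply (subst sum.swap[of "\<lambda>d n. w [d] x * (chr g x d n b * chr g x n a c)"])
  apply (subst sum.swap[of "\<lambda>d n. w [d] x * (chr g x d n a * chr g x n b c)"])
  apply (simp add: algebra_simps chr_sym[of x])
  done


lemma g_cancel:
  assumes x: "x \<in> U" and H: "\<And>b. (\<Sum>c\<in>UNIV. P c * g x $ c $ b) = (\<Sum>c\<in>UNIV. Q c * g x $ c $ b)"
  shows "P a = Q a"
proof -
  have E: "R a = (\<Sum>b\<in>UNIV. (\<Sum>c\<in>UNIV. R c * g x $ c $ b) * ginv g x $ b $ a)" for R
  proof -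
    have "(\<Sum>b\<in>UNIV. (\<Sum>c\<in>UNIV. R c * g x $ c $ b) * ginv g x $ b $ a)
        = (\<Sum>c\<in>UNIV. R c * (\<Sum>b\<in>UNIV. g x $ c $ b * ginv g x $ b $ a))"
      apply (simp add: sum_distrib_left sum_distrib_right mult.assoc)
      apply (subst sum.swap) apply (simp add: mult_ac)
      done
    also have "\<dots> = R a" by (simp add: ginv_right[OF x])
    finally show ?thesis by simp
  qed
  show ?thesis using E[of P] E[of Q] H by simp
qed

lemma dginv:
  assumes x: "x \<in> U"
  shows "pd e (\<lambda>y. ginv g y $ a $ c) x = - (\<Sum>d\<in>UNIV. chr g x c e d * ginv g x $ a $ d) - (\<Sum>d\<in>UNIV. chr g x a e d * ginv g x $ d $ c)"
proof (rule g_cancel[OF x, where P = "\<lambda>c. pd e (\<lambda>y. ginv g y $ a $ c) x"])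
  fix b
  have Z0: "pd e (\<lambda>y. \<Sum>k\<in>UNIV. ginv g y $ a $ k * g y $ k $ b) x = pd e (\<lambda>y. if a = b then 1 else 0) x"
    by (rule pd_loc[OF x]) (simp add: ginv_left)
  have Z: "(\<Sum>k\<in>UNIV. pd e (\<lambda>y. ginv g y $ a $ k) x * g x $ k $ b) = - (\<Sum>k\<in>UNIV. ginv g x $ a $ k * pd e (\<lambda>y. g y $ k $ b) x)"
    using Z0 x by (simp add: sum.distrib eq_neg_iff_add_eq_0)
  have "(\<Sum>k\<in>UNIV. ginv g x $ a $ k * pd e (\<lambda>y. g y $ k $ b) x)
     = (\<Sum>k\<in>UNIV. \<Sum>d\<in>UNIV. ginv g x $ a $ k * chr g x d e k * g x $ d $ b)
       + (\<Sum>d\<in>UNIV. (\<Sum>k\<in>UNIV. ginv g x $ a $ k * g x $ k $ d) * chr g x d e b)"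
    apply (simp add: dg[OF x] sum.distrib distrib_left sum_distrib_left sum_distrib_right mult.assoc)
    apply (subst (2) sum.swap) apply (simp add: mult_ac)
    done
  also have "\<dots> = (\<Sum>k\<in>UNIV. \<Sum>d\<in>UNIV. ginv g x $ a $ k * chr g x d e k * g x $ d $ b) + chr g x a e b"
    by (simp add: ginv_left[OF x])
  finally have L: "(\<Sum>c\<in>UNIV. pd e (\<lambda>y. ginv g y $ a $ c) x * g x $ c $ b)
     = - (\<Sum>k\<in>UNIV. \<Sum>d\<in>UNIV. ginv g x $ a $ k * chr g x d e k * g x $ d $ b) - chr g x a e b"
    using Z by simp
  have "(\<Sum>c\<in>UNIV. (- (\<Sum>d\<in>UNIV. chr g x c e d * ginv g x $ a $ d) - (\<Sum>d\<in>UNIV. chr g x a e d * ginv g x $ d $ c)) * g x $ c $ b)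
     = - (\<Sum>c\<in>UNIV. \<Sum>d\<in>UNIV. chr g x c e d * ginv g x $ a $ d * g x $ c $ b)
       - (\<Sum>d\<in>UNIV. chr g x a e d * (\<Sum>c\<in>UNIV. ginv g x $ d $ c * g x $ c $ b))"
    apply (simp add: sum_subtractf left_diff_distrib sum_distrib_left sum_distrib_right sum_negf mult.assoc)
    apply (subst sum.swap) apply simp
    done
  also have "\<dots> = - (\<Sum>c\<in>UNIV. \<Sum>d\<in>UNIV. chr g x c e d * ginv g x $ a $ d * g x $ c $ b) - chr g x a e b"
    by (simp add: ginv_left[OF x])
  also have "\<dots> = - (\<Sum>k\<in>UNIV. \<Sum>d\<in>UNIV. ginv g x $ a $ k * chr g x d e k * g x $ d $ b) - chr g x a e b"
    by (subst sum.swap) (simp add: chr_sym[OF x] mult_ac)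
  finally show "(\<Sum>c\<in>UNIV. pd e (\<lambda>y. ginv g y $ a $ c) x * g x $ c $ b)
     = (\<Sum>c\<in>UNIV. (- (\<Sum>d\<in>UNIV. chr g x c e d * ginv g x $ a $ d) - (\<Sum>d\<in>UNIV. chr g x a e d * ginv g x $ d $ c)) * g x $ c $ b)"
    using L by simp
qed

end


context geo
begin

definition cf :: "bool list \<Rightarrow> 'n list \<Rightarrow> 'n \<Rightarrow> nat \<Rightarrow> 'n \<Rightarrow> real^'n \<Rightarrow> real" where
  "cf vs js c p d x = (if vs ! p then chr g x (js ! p) c d else - chr g x d c (js ! p))"

lemma cf_sm[simp]: "sm (cf vs js c p d)"
  unfolding cf_def by simp

lemma covD_cf: "covD g vs T (c # js) x = pd c (T js) x + (\<Sum>p<length vs. \<Sum>d\<in>UNIV. cf vs js c p d x * T (js[p := d]) x)"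
  unfolding covD_def cf_def by (auto intro!: sum.cong)

lemma covD_add:
  assumes "x \<in> U" "smT A" "smT B"
  shows "covD g vs (\<lambda>js y. A js y + B js y) idx x = covD g vs A idx x + covD g vs B idx x"
proof (cases idx)
  case Nil then show ?thesis by (simp add: covD_def)
next
  case (Cons c js) then show ?thesis using assms
    by (simp add: covD_cf distrib_left sum.distrib)
qed

lemma covD_diff:
  assumes "x \<in> U" "smT A" "smT B"
  shows "covD g vs (\<lambda>js y. A js y - B js y) idx x = covD g vs A idx x - covD g vs B idx x"
proof (cases idx)
  case Nil then show ?thesis by (simp add: covD_def)
next
  case (Cons c js) then show ?thesis using assms
    by (simp add: covD_cf right_diff_distrib sum_subtractf)
qed

lemma covD_cmult:
  assumes "x \<in> U" "smT A"
  shows "covD g vs (\<lambda>js y. k * A js y) idx x = k * covD g vs A idx x"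
proof (cases idx)
  case Nil then show ?thesis by (simp add: covD_def)
next
  case (Cons c js) then show ?thesis using assms
    by (simp add: covD_cf distrib_left sum_distrib_left mult_ac)
qed

lemma covD_minus:
  assumes "x \<in> U" "smT A"
  shows "covD g vs (\<lambda>js y. - A js y) idx x = - covD g vs A idx x"
  using covD_cmult[OF assms, of vs "-1" idx] by simp

lemma covD_sum:
  assumes "x \<in> U" "\<And>e. smT (F e)"
  shows "covD g vs (\<lambda>js y. \<Sum>e\<in>(UNIV::'n set). F e js y) idx x = (\<Sum>e\<in>UNIV. covD g vs (F e) idx x)"
proof (cases idx)
  case Nil then show ?thesis by (simp add: covD_def)
next
  case (Cons c js)
  have "(\<Sum>p<length vs. \<Sum>d\<in>UNIV. cf vs js c p d x * (\<Sum>e\<in>UNIV. F e (js[p := d]) x))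
     = (\<Sum>e\<in>UNIV. \<Sum>p<length vs. \<Sum>d\<in>UNIV. cf vs js c p d x * F e (js[p := d]) x)"
  proof -
    have "(\<Sum>p<length vs. \<Sum>d\<in>UNIV. cf vs js c p d x * (\<Sum>e\<in>UNIV. F e (js[p := d]) x))
       = (\<Sum>p<length vs. \<Sum>d\<in>UNIV. \<Sum>e\<in>UNIV. cf vs js c p d x * F e (js[p := d]) x)"
      by (simp add: sum_distrib_left)
    also have "\<dots> = (\<Sum>p<length vs. \<Sum>e\<in>UNIV. \<Sum>d\<in>UNIV. cf vs js c p d x * F e (js[p := d]) x)"
      by (rule sum.cong[OF refl], rule sum.swap)
    also have "\<dots> = (\<Sum>e\<in>UNIV. \<Sum>p<length vs. \<Sum>d\<in>UNIV. cf vs js c p d x * F e (js[p := d]) x)"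
      by (rule sum.swap)
    finally show ?thesis .
  qed
  with Cons show ?thesis using assms by (simp add: covD_cf sum.distrib)
qed

lemma covD_loc:
  assumes x: "x \<in> U" and E: "\<And>js' y. length js' = length js \<Longrightarrow> y \<in> U \<Longrightarrow> A js' y = B js' y"
  shows "covD g vs A (c # js) x = covD g vs B (c # js) x"
proof -
  have "pd c (A js) x = pd c (B js) x" by (rule pd_loc[OF x]) (simp add: E)
  moreover have "A (js[p := d]) x = B (js[p := d]) x" for p d using E x by simp
  ultimately show ?thesis by (simp add: covD_cf)
qed

subsection \<open>Ricci identity for covariant 2-tensors\<close>

lemma ricci2:
  assumes x: "x \<in> U" and w: "smT w"
  shows "covD g [False, False, False] (covD g [False, False] w) [a, b, c, e] x
      - covD g [False, False, False] (covD g [False, False] w) [b, a, c, e] x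
     = (\<Sum>d\<in>UNIV. riem g x a b c d * w [d, e] x) + (\<Sum>d\<in>UNIV. riem g x a b e d * w [c, d] x)"
  using x w
  apply (simp add: covD_FFF covD_FF riem_def pd_swap[of x "w [c, e]" a b] algebra_simps sum_subtractf sum.distrib sum_distrib_left sum_distrib_right chr_sym[of x])
  apply (subst sum.swap[of "\<lambda>d n. chr g x d n b * (chr g x n a c * w [d, e] x)"])
  apply (subst sum.swap[of "\<lambda>d n. chr g x d n b * (chr g x n a e * w [c, d] x)"])
  apply (subst sum.swap[of "\<lambda>d n. chr g x d b c * (chr g x n a e * w [d, n] x)"])
  apply (subst sum.swap[of "\<lambda>d n. chr g x d b c * (chr g x n d a * w [n, e] x)"])
  apply (subst sum.swap[of "\<lambda>d n. chr g x d b e * (chr g x n a c * w [n, d] x)"])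
  apply (subst sum.swap[of "\<lambda>d n. chr g x d b e * (chr g x n d a * w [c, n] x)"])
  apply (simp add: algebra_simps chr_sym[of x])
  done

end


lemma len1: "length js = Suc 0 \<Longrightarrow> \<exists>a. js = [a]"
  by (cases js) auto
lemma len2: "length js = Suc (Suc 0) \<Longrightarrow> \<exists>a b. js = [a, b]"
  by (cases js; cases "tl js") auto
lemma len3: "length js = Suc (Suc (Suc 0)) \<Longrightarrow> \<exists>a b c. js = [a, b, c]"
  by (cases js; cases "tl js"; cases "tl (tl js)") auto
lemma len4: "length js = Suc (Suc (Suc (Suc 0))) \<Longrightarrow> \<exists>a b c d. js = [a, b, c, d]"
  by (cases js; cases "tl js"; cases "tl (tl js)"; cases "tl (tl (tl js))") auto

lemma sum3_132: "(\<Sum>a\<in>A. \<Sum>b\<in>B. \<Sum>c\<in>C. F a b c) = (\<Sum>a\<in>A. \<Sum>c\<in>C. \<Sum>b\<in>B. F a b c)"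
  by (rule sum.cong[OF refl], rule sum.swap)
lemma sum3_213: "(\<Sum>a\<in>A. \<Sum>b\<in>B. \<Sum>c\<in>C. F a b c) = (\<Sum>b\<in>B. \<Sum>a\<in>A. \<Sum>c\<in>C. F a b c)"
  by (rule sum.swap)
lemma sum3_312: "(\<Sum>a\<in>A. \<Sum>b\<in>B. \<Sum>c\<in>C. F a b c) = (\<Sum>c\<in>C. \<Sum>a\<in>A. \<Sum>b\<in>B. F a b c)"
proof -
  have "(\<Sum>a\<in>A. \<Sum>b\<in>B. \<Sum>c\<in>C. F a b c) = (\<Sum>a\<in>A. \<Sum>c\<in>C. \<Sum>b\<in>B. F a b c)" by (rule sum3_132)
  also have "\<dots> = (\<Sum>c\<in>C. \<Sum>a\<in>A. \<Sum>b\<in>B. F a b c)" by (rule sum.swap)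
  finally show ?thesis .
qed
lemma sum3_321: "(\<Sum>a\<in>A. \<Sum>b\<in>B. \<Sum>c\<in>C. F a b c) = (\<Sum>c\<in>C. \<Sum>b\<in>B. \<Sum>a\<in>A. F a b c)"
proof -
  have "(\<Sum>a\<in>A. \<Sum>b\<in>B. \<Sum>c\<in>C. F a b c) = (\<Sum>c\<in>C. \<Sum>a\<in>A. \<Sum>b\<in>B. F a b c)" by (rule sum3_312)
  also have "\<dots> = (\<Sum>c\<in>C. \<Sum>b\<in>B. \<Sum>a\<in>A. F a b c)" by (rule sum.cong[OF refl], rule sum.swap)
  finally show ?thesis .
qed
lemma sum3_231: "(\<Sum>a\<in>A. \<Sum>b\<in>B. \<Sum>c\<in>C. F a b c) = (\<Sum>b\<in>B. \<Sum>c\<in>C. \<Sum>a\<in>A. F a b c)"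
proof -
  have "(\<Sum>a\<in>A. \<Sum>b\<in>B. \<Sum>c\<in>C. F a b c) = (\<Sum>b\<in>B. \<Sum>a\<in>A. \<Sum>c\<in>C. F a b c)" by (rule sum.swap)
  also have "\<dots> = (\<Sum>b\<in>B. \<Sum>c\<in>C. \<Sum>a\<in>A. F a b c)" by (rule sum.cong[OF refl], rule sum.swap)
  finally show ?thesis .
qed

context geo
begin

definition gT :: "'n list \<Rightarrow> real^'n \<Rightarrow> real" where
  "gT js y = g y $ (js ! 0) $ (js ! 1)"
definition RT :: "'n list \<Rightarrow> real^'n \<Rightarrow> real" where
  "RT js y = riem g y (js ! 0) (js ! 1) (js ! 2) (js ! 3)"
definition RicT :: "'n list \<Rightarrow> real^'n \<Rightarrow> real" where
  "RicT js y = ric g (js ! 0) (js ! 1) y"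
definition lowV :: "(real^'n \<Rightarrow> real^'n) \<Rightarrow> 'n list \<Rightarrow> real^'n \<Rightarrow> real" where
  "lowV W js y = (\<Sum>a\<in>UNIV. g y $ (js ! 0) $ a * W y $ a)"

lemma gT_fun: "gT js = (\<lambda>y. g y $ (js ! 0) $ (js ! 1))" by (rule ext) (simp add: gT_def)
lemma RT_fun: "RT js = (\<lambda>y. riem g y (js ! 0) (js ! 1) (js ! 2) (js ! 3))" by (rule ext) (simp add: RT_def)
lemma RicT_fun: "RicT js = ric g (js ! 0) (js ! 1)" by (rule ext) (simp add: RicT_def)
lemma lowV_fun: "lowV W js = (\<lambda>y. \<Sum>a\<in>UNIV. g y $ (js ! 0) $ a * W y $ a)" by (rule ext) (simp add: lowV_def)
lemma vt_fun: "vt W js = (\<lambda>y. W y $ (js ! 0))" by (rule ext) (simp add: vt_def)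

lemma ric_sm[simp]: "sm (ric g a b)"
proof -
  have "sm (\<lambda>y. \<Sum>c\<in>UNIV. riem g y a c b c)" by simp
  moreover have "(\<lambda>y. \<Sum>c\<in>UNIV. riem g y a c b c) = ric g a b" by (rule ext) (simp add: ric_def)
  ultimately show ?thesis by simp
qed

lemma gT_sm[simp]: "smT gT" unfolding smT_def gT_def by simp
lemma RT_sm[simp]: "smT RT" unfolding smT_def RT_def by simp
lemma RicT_sm[simp]: "smT RicT" unfolding smT_def RicT_def by simp
lemma lowV_sm[simp]: "(\<And>i. sm (\<lambda>y. W y $ i)) \<Longrightarrow> smT (lowV W)" unfolding smT_def lowV_def by simp
lemma vt_sm[simp]: "(\<And>i. sm (\<lambda>y. W y $ i)) \<Longrightarrow> smT (vt W)" unfolding smT_def vt_def by simp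

lemma covD_zero: "covD g vs (\<lambda>js y. 0) idx x = 0"
proof (cases idx)
  case Nil then show ?thesis by (simp add: covD_def)
next
  case (Cons c js) then show ?thesis by (simp only: covD_cf) simp
qed

lemma nabla_g: "x \<in> U \<Longrightarrow> covD g [False, False] gT [c, a, b] x = 0"
  by (simp add: covD_FF gT_fun dg)

lemma nabla_nabla_g: assumes x: "x \<in> U"
  shows "covD g [False, False, False] (covD g [False, False] gT) [a, b, c, e] x = 0"
proof -
  have "covD g [False, False, False] (covD g [False, False] gT) [a, b, c, e] x = covD g [False, False, False] (\<lambda>js y. 0) [a, b, c, e] x"
  proof (rule covD_loc[OF x])
    fix js' :: "'n list" and y assume "length js' = length [b, c, e]" "y \<in> U"
    then obtain p q r where "js' = [p, q, r]" using len3 by force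
    then show "covD g [False, False] gT js' y = 0" using nabla_g \<open>y \<in> U\<close> by simp
  qed
  then show ?thesis by (simp add: covD_zero)
qed

lemma riem_anti1: "riem g x a b c d = - riem g x b a c d"
  by (simp add: riem_def algebra_simps sum_subtractf)

lemma Rl_anti2: assumes x: "x \<in> U"
  shows "(\<Sum>d\<in>UNIV. riem g x a b c d * g x $ d $ e) = - (\<Sum>d\<in>UNIV. riem g x a b e d * g x $ d $ c)"
proof -
  have "0 = (\<Sum>d\<in>UNIV. riem g x a b c d * gT [d, e] x) + (\<Sum>d\<in>UNIV. riem g x a b e d * gT [c, d] x)"
    using ricci2[OF x gT_sm, of a b c e] nabla_nabla_g[OF x] by simp
  moreover have "(\<Sum>d\<in>UNIV. riem g x a b e d * gT [c, d] x) = (\<Sum>d\<in>UNIV. riem g x a b e d * g x $ d $ c)"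
    using g_sym[OF x] by (simp add: gT_def)
  ultimately show ?thesis by (simp add: gT_def eq_neg_iff_add_eq_0)
qed

lemma bianchi1: assumes x: "x \<in> U"
  shows "riem g x a b c d + riem g x b c a d + riem g x c a b d = 0"
  using x by (simp add: riem_def algebra_simps sum_subtractf pd_chr_sym[of x] chr_sym[of x])

definition Rl :: "real^'n \<Rightarrow> 'n \<Rightarrow> 'n \<Rightarrow> 'n \<Rightarrow> 'n \<Rightarrow> real" where
  "Rl x a b c d = (\<Sum>f\<in>UNIV. riem g x a b c f * g x $ f $ d)"

lemma Rl_anti1: "Rl x a b c d = - Rl x b a c d"
  unfolding Rl_def by (subst riem_anti1) (simp add: sum_negf)

lemma Rl_anti2': "x \<in> U \<Longrightarrow> Rl x a b c d = - Rl x a b d c"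
  unfolding Rl_def by (rule Rl_anti2)

lemma Rl_b1: assumes x: "x \<in> U" shows "Rl x a b c d + Rl x b c a d + Rl x c a b d = 0"
proof -
  have "Rl x a b c d + Rl x b c a d + Rl x c a b d = (\<Sum>f\<in>UNIV. (riem g x a b c f + riem g x b c a f + riem g x c a b f) * g x $ f $ d)"
    unfolding Rl_def by (simp add: sum.distrib distrib_right)
  also have "\<dots> = 0" using bianchi1[OF x] by simp
  finally show ?thesis .
qed

lemma Rl_pair: assumes x: "x \<in> U" shows "Rl x a b c d = Rl x c d a b"
proof -
  have A1: "\<And>a b c d. Rl x a b c d = - Rl x b a c d" by (rule Rl_anti1)
  have A2: "\<And>a b c d. Rl x a b c d = - Rl x a b d c" by (rule Rl_anti2'[OF x])
  have B: "\<And>a b c d. Rl x a b c d + Rl x b c a d + Rl x c a b d = 0" by (rule Rl_b1[OF x])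
  show ?thesis using A1[of a b c d] A2[of a b c d] A1[of a b d c] A2[of a b d c] A1[of a c d b] A2[of a c d b] A1[of b c a d] A2[of b c a d] A1[of b c d a] A2[of b c d a] A1[of b d a c] A2[of b d a c] A1[of c a b d] A2[of c a b d] A1[of c d a b] A2[of c d a b] A1[of c d b a] A2[of c d b a] A1[of d a b c] A2[of d a b c] A1[of d a c b] A2[of d a c b] A1[of d b c a] A2[of d b c a] B[of a b c d] B[of b c d a] B[of c d a b] B[of d a b c] by linarith
qed

lemma riem_raise: assumes x: "x \<in> U" shows "riem g x a b c d = (\<Sum>k\<in>UNIV. Rl x a b c k * ginv g x $ k $ d)"
proof -
  have "(\<Sum>k\<in>UNIV. Rl x a b c k * ginv g x $ k $ d) = (\<Sum>f\<in>UNIV. riem g x a b c f * (\<Sum>k\<in>UNIV. g x $ f $ k * ginv g x $ k $ d))"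
    unfolding Rl_def
    apply (simp add: sum_distrib_left sum_distrib_right mult.assoc)
    apply (subst sum.swap) apply simp
    done
  also have "\<dots> = riem g x a b c d" by (simp add: ginv_right[OF x])
  finally show ?thesis by simp
qed

lemma ric_Rl: assumes x: "x \<in> U" shows "ric g a b x = (\<Sum>c\<in>UNIV. \<Sum>k\<in>UNIV. Rl x a c b k * ginv g x $ k $ c)"
  unfolding ric_def using riem_raise[OF x] by simp

lemma ric_sym: assumes x: "x \<in> U" shows "ric g a b x = ric g b a x"
proof -
  have "ric g b a x = (\<Sum>c\<in>UNIV. \<Sum>k\<in>UNIV. Rl x a k b c * ginv g x $ k $ c)"
    unfolding ric_Rl[OF x] using Rl_pair[OF x] by simp
  also have "\<dots> = (\<Sum>k\<in>UNIV. \<Sum>c\<in>UNIV. Rl x a k b c * ginv g x $ c $ k)"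
    using ginv_sym[OF x] by (subst sum.swap) simp
  also have "\<dots> = ric g a b x" unfolding ric_Rl[OF x] by simp
  finally show ?thesis by simp
qed

lemma sw2: "covD g [False, False] (\<lambda>js. T [js ! 1, js ! 0]) [c, a, b] x = covD g [False, False] T [c, b, a] x"
  by (simp add: covD_FF)

lemma sw3_01: "covD g [False, False, False] (\<lambda>js. T [js ! 1, js ! 0, js ! 2]) [c, a, b, e] x = covD g [False, False, False] T [c, b, a, e] x"
  by (simp add: covD_FFF algebra_simps)

lemma sw3_12: "covD g [False, False, False] (\<lambda>js. T [js ! 0, js ! 2, js ! 1]) [c, a, b, e] x = covD g [False, False, False] T [c, a, e, b] x"
  by (simp add: covD_FFF algebra_simps)

lemma sw4_01: "covD g [False, False, False, True] (\<lambda>js. T [js ! 1, js ! 0, js ! 2, js ! 3]) [c, a, b, e, f] x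
    = covD g [False, False, False, True] T [c, b, a, e, f] x"
  by (simp add: covD_FFFT algebra_simps)

subsection \<open>Lie derivative and lowering\<close>

lemma t2_fun: "t2 u js = u (js ! 0) (js ! 1)" by (rule ext) (simp add: t2_def)

lemma lie2_torsionfree:
  assumes x: "x \<in> U" and W: "\<And>i. sm (\<lambda>y. W y $ i)" and u: "\<And>a b. sm (u a b)"
  shows "lie2 W u a b x = (\<Sum>c\<in>UNIV. W x $ c * covD g [False, False] (t2 u) [c, a, b] x)
     + (\<Sum>c\<in>UNIV. u c b x * covD g [True] (vt W) [a, c] x) + (\<Sum>c\<in>UNIV. u a c x * covD g [True] (vt W) [b, c] x)"
  using x W u
  apply (simp add: lie2_def covD_FF covD_T t2_fun vt_fun algebra_simps sum.distrib sum_subtractf sum_distrib_left chr_sym[of x])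
  apply (subst sum.swap[of "\<lambda>c n. W x $ n * (u a c x * chr g x c n b)"])
  apply (subst sum.swap[of "\<lambda>c n. W x $ n * (u c b x * chr g x c n a)"])
  apply (simp add: algebra_simps chr_sym[of x])
  done

lemma lowV1:
  assumes x: "x \<in> U" and W: "\<And>i. sm (\<lambda>y. W y $ i)"
  shows "covD g [False] (lowV W) [c, b] x = (\<Sum>a\<in>UNIV. g x $ b $ a * covD g [True] (vt W) [c, a] x)"
  using x W
  apply (simp add: covD_F covD_T lowV_fun vt_fun dg algebra_simps sum.distrib sum_subtractf sum_distrib_left sum_distrib_right chr_sym[of x])
  apply (subst sum.swap[of "\<lambda>a n. W x $ n * (chr g x a n c * g x $ b $ a)"])
  apply (subst sum.swap[of "\<lambda>d n. W x $ n * (chr g x d b c * g x $ d $ n)"])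
  apply (simp add: algebra_simps chr_sym[of x])
  done

lemma lowT2:
  assumes x: "x \<in> U" and T: "smT T"
  shows "covD g [False, False] (\<lambda>js y. \<Sum>a\<in>UNIV. g y $ (js ! 1) $ a * T [js ! 0, a] y) [d, c, b] x
     = (\<Sum>a\<in>UNIV. g x $ b $ a * covD g [False, True] T [d, c, a] x)"
  using x T
  apply (simp add: covD_FF covD_FT dg algebra_simps sum.distrib sum_subtractf sum_distrib_left sum_distrib_right chr_sym[of x])
  apply (subst sum.swap[of "\<lambda>a n. chr g x a n d * (g x $ b $ a * T [c, n] x)"])
  apply (subst sum.swap[of "\<lambda>da n. chr g x da b d * (g x $ da $ n * T [c, n] x)"])
  apply (subst sum.swap[of "\<lambda>da n. chr g x da c d * (g x $ b $ n * T [da, n] x)"])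
  apply (simp add: algebra_simps chr_sym[of x])
  done

lemma scal_g:
  assumes x: "x \<in> U" and f: "sm f"
  shows "covD g [False, False] (\<lambda>js y. f y * g y $ (js ! 0) $ (js ! 1)) [c, a, b] x = pd c f x * g x $ a $ b"
  using x f
  apply (simp add: covD_FF dg algebra_simps sum.distrib sum_subtractf sum_distrib_left sum_distrib_right)
  done

lemma trace_ginv2:
  assumes x: "x \<in> U" and T: "smT T"
  shows "pd e (\<lambda>y. \<Sum>a\<in>UNIV. \<Sum>c\<in>UNIV. ginv g y $ a $ c * T [c, a] y) x
     = (\<Sum>a\<in>UNIV. \<Sum>c\<in>UNIV. ginv g x $ a $ c * covD g [False, False] T [e, c, a] x)"
  using x T
  apply (simp add: covD_FF dginv algebra_simps sum.distrib sum_subtractf sum_distrib_left sum_distrib_right chr_sym[of x])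
  apply (subst sum3_132[of "\<lambda>a c n. chr g x c n e * (ginv g x $ a $ n * T [c, a] x)"])
  apply (subst sum3_321[of "\<lambda>a c n. chr g x a n e * (ginv g x $ n $ c * T [c, a] x)"])
  apply (simp add: algebra_simps chr_sym[of x])
  done

lemma trace_ginv3:
  assumes x: "x \<in> U" and T: "smT T"
  shows "covD g [False] (\<lambda>js y. \<Sum>c\<in>UNIV. \<Sum>d\<in>UNIV. ginv g y $ c $ d * T [c, d, js ! 0] y) [a, b] x
     = (\<Sum>c\<in>UNIV. \<Sum>d\<in>UNIV. ginv g x $ c $ d * covD g [False, False, False] T [a, c, d, b] x)"
  using x T
  apply (simp add: covD_F covD_FFF dginv algebra_simps sum.distrib sum_subtractf sum_distrib_left sum_distrib_right chr_sym[of x])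
  apply (subst sum3_231[of "\<lambda>d n na. chr g x d a b * (ginv g x $ n $ na * T [n, na, d] x)"])
  apply (subst sum3_132[of "\<lambda>c d n. chr g x d n a * (ginv g x $ c $ n * T [c, d, b] x)"])
  apply (subst sum3_321[of "\<lambda>c d n. chr g x c n a * (ginv g x $ n $ d * T [c, d, b] x)"])
  apply (simp add: algebra_simps chr_sym[of x])
  done

end


context geo
begin

lemma ric_fun: "ric g a b = (\<lambda>y. \<Sum>c\<in>UNIV. riem g y a c b c)"
  by (rule ext) (simp add: ric_def)

lemma leib_Rw:
  assumes x: "x \<in> U" and w: "smT w"
  shows "covD g [False, False, False] (\<lambda>js y. \<Sum>e\<in>UNIV. riem g y (js ! 0) (js ! 1) (js ! 2) e * w [e] y) [c, d, a, b] x
    = (\<Sum>e\<in>UNIV. covD g [False, False, False, True] RT [c, d, a, b, e] x * w [e] x)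
      + (\<Sum>e\<in>UNIV. riem g x d a b e * covD g [False] w [c, e] x)"
  using x w
  apply (simp add: covD_FFF covD_FFFT covD_F RT_fun algebra_simps sum.distrib sum_subtractf sum_distrib_left sum_distrib_right chr_sym[of x])
  apply (subst sum.swap[of "\<lambda>da n. w [n] x * (chr g x da a c * riem g x d da b n)"])
  apply (subst sum.swap[of "\<lambda>da n. w [n] x * (chr g x da b c * riem g x d a da n)"])
  apply (subst sum.swap[of "\<lambda>da n. w [n] x * (chr g x da c d * riem g x da a b n)"])
  apply (subst sum.swap[of "\<lambda>e n. w [e] x * (chr g x e n c * riem g x d a b n)"])
  apply (simp add: algebra_simps chr_sym[of x])
  done

lemma leib_RicW:
  assumes x: "x \<in> U" and W: "\<And>i. sm (\<lambda>y. W y $ i)"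
  shows "covD g [False] (\<lambda>js y. \<Sum>d\<in>UNIV. ric g (js ! 0) d y * W y $ d) [a, b] x
    = (\<Sum>d\<in>UNIV. covD g [False, False] RicT [a, b, d] x * W x $ d)
      + (\<Sum>d\<in>UNIV. ric g b d x * covD g [True] (vt W) [a, d] x)"
  using x W
  apply (simp add: covD_F covD_FF covD_T RicT_fun vt_fun algebra_simps sum.distrib sum_subtractf sum_distrib_left sum_distrib_right chr_sym[of x])
  apply (subst sum.swap[of "\<lambda>d n. W x $ n * (ric g b d x * chr g x d n a)"])
  apply (subst sum.swap[of "\<lambda>d n. W x $ n * (ric g d n x * chr g x d a b)"])
  apply (simp add: algebra_simps chr_sym[of x])
  done

lemma leib_Z:
  assumes x: "x \<in> U" and W: "\<And>i. sm (\<lambda>y. W y $ i)"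
  shows "covD g [False, False, False] (\<lambda>js y. \<Sum>e\<in>UNIV. \<Sum>k\<in>UNIV. g y $ (js ! 0) $ k * riem g y (js ! 2) e (js ! 1) k * W y $ e) [c, d, a, b] x
    = (\<Sum>e\<in>UNIV. \<Sum>k\<in>UNIV. g x $ d $ k * (covD g [False, False, False, True] RT [c, b, e, a, k] x * W x $ e
         + riem g x b e a k * covD g [True] (vt W) [c, e] x))"
  using x W
  apply (simp add: covD_FFF covD_FFFT covD_T RT_fun vt_fun dg algebra_simps sum.distrib sum_subtractf sum_distrib_left sum_distrib_right chr_sym[of x])
  apply (subst sum3_231[of "\<lambda>da n na. W x $ n * (chr g x da a c * (g x $ d $ na * riem g x b n da na))"])
  apply (subst sum3_231[of "\<lambda>da n na. W x $ n * (chr g x da b c * (g x $ d $ na * riem g x da n a na))"])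
  apply (subst sum3_231[of "\<lambda>da n na. W x $ n * (chr g x da c d * (g x $ da $ na * riem g x b n a na))"])
  apply (subst sum3_132[of "\<lambda>e k n. W x $ e * (chr g x k n c * (g x $ d $ k * riem g x b e a n))"])
  apply (subst sum3_321[of "\<lambda>e k n. W x $ n * (chr g x e n c * (g x $ d $ k * riem g x b e a k))"])
  apply (simp add: algebra_simps chr_sym[of x])
  done

lemma contr_Ric:
  assumes x: "x \<in> U"
  shows "covD g [False, False] RicT [c, a, b] x = (\<Sum>d\<in>UNIV. covD g [False, False, False, True] RT [c, a, d, b, d] x)"
  using x
  apply (simp add: covD_FF covD_FFFT RicT_fun RT_fun ric_fun algebra_simps sum.distrib sum_subtractf sum_distrib_left sum_distrib_right chr_sym[of x])
  apply (subst sum.swap[of "\<lambda>d n. chr g x d a c * riem g x d n b n"])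
  apply (subst sum.swap[of "\<lambda>d n. chr g x d b c * riem g x a n d n"])
  apply (subst sum.swap[of "\<lambda>d da. chr g x d da c * riem g x a d b da"])
  apply (simp add: algebra_simps chr_sym[of x])
  done

end


context geo
begin

lemma ricci1_all:
  assumes y: "y \<in> U" and w: "smT w" and l: "length js = Suc (Suc (Suc 0))"
  shows "covD g [False, False] (covD g [False] w) js y
     = covD g [False, False] (covD g [False] w) [js ! 1, js ! 0, js ! 2] y
       + (\<Sum>d\<in>UNIV. riem g y (js ! 0) (js ! 1) (js ! 2) d * w [d] y)"
proof -
  obtain a b c where js: "js = [a, b, c]" using len3[OF l] by blast
  show ?thesis using ricci1[OF y w, of a b c] js by simp
qed

lemma ricci1_cov:
  assumes x: "x \<in> U" and w: "smT w"
  shows "covD g [False, False, False] (covD g [False, False] (covD g [False] w)) [e, a, b, c] x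
     - covD g [False, False, False] (covD g [False, False] (covD g [False] w)) [e, b, a, c] x
     = (\<Sum>d\<in>UNIV. covD g [False, False, False, True] RT [e, a, b, c, d] x * w [d] x)
       + (\<Sum>d\<in>UNIV. riem g x a b c d * covD g [False] w [e, d] x)"
proof -
  let ?N2 = "covD g [False, False] (covD g [False] w)"
  have N2s: "smT ?N2" using w by simp
  have sA: "smT (\<lambda>js. ?N2 [js ! 1, js ! 0, js ! 2])" unfolding smT_def using N2s by simp
  have sB: "smT (\<lambda>js y. \<Sum>d\<in>UNIV. riem g y (js ! 0) (js ! 1) (js ! 2) d * w [d] y)" unfolding smT_def using w by simp
  have "covD g [False, False, False] ?N2 [e, a, b, c] x
      = covD g [False, False, False] (\<lambda>js y. ?N2 [js ! 1, js ! 0, js ! 2] y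
          + (\<Sum>d\<in>UNIV. riem g y (js ! 0) (js ! 1) (js ! 2) d * w [d] y)) [e, a, b, c] x"
  proof (rule covD_loc[OF x])
    fix js' :: "'n list" and y assume l: "length js' = length [a, b, c]" and y: "y \<in> U"
    then obtain p q r where js': "js' = [p, q, r]" using len3 by force
    show "?N2 js' y = ?N2 [js' ! 1, js' ! 0, js' ! 2] y + (\<Sum>d\<in>UNIV. riem g y (js' ! 0) (js' ! 1) (js' ! 2) d * w [d] y)"
      using ricci1[OF y w, of p q r] unfolding js' by simp
  qed
  also have "\<dots> = covD g [False, False, False] (\<lambda>js. ?N2 [js ! 1, js ! 0, js ! 2]) [e, a, b, c] x
      + covD g [False, False, False] (\<lambda>js y. \<Sum>d\<in>UNIV. riem g y (js ! 0) (js ! 1) (js ! 2) d * w [d] y) [e, a, b, c] x"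
    using covD_add[OF x sA sB] by simp
  also have "\<dots> = covD g [False, False, False] ?N2 [e, b, a, c] x
      + ((\<Sum>d\<in>UNIV. covD g [False, False, False, True] RT [e, a, b, c, d] x * w [d] x)
       + (\<Sum>d\<in>UNIV. riem g x a b c d * covD g [False] w [e, d] x))"
    by (simp only: sw3_01 leib_Rw[OF x w])
  finally show ?thesis by simp
qed

lemma bianchi2_w:
  assumes x: "x \<in> U" and w: "smT w"
  shows "(\<Sum>d\<in>UNIV. (covD g [False, False, False, True] RT [e, a, b, c, d] x
        + covD g [False, False, False, True] RT [a, b, e, c, d] x
        + covD g [False, False, False, True] RT [b, e, a, c, d] x) * w [d] x) = 0"
proof -
  let ?X = "covD g [False, False, False] (covD g [False, False] (covD g [False] w))"
  let ?N1 = "covD g [False] w"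
  have w1: "smT ?N1" using w by simp
  note I = ricci2[OF x w1]
  note J = ricci1_cov[OF x w]
  have B1: "riem g x e a b d + riem g x a b e d + riem g x b e a d = 0" for d
    using bianchi1[OF x] by blast
  have S: "(\<Sum>d\<in>UNIV. riem g x e a b d * ?N1 [d, c] x) + (\<Sum>d\<in>UNIV. riem g x a b e d * ?N1 [d, c] x)
      + (\<Sum>d\<in>UNIV. riem g x b e a d * ?N1 [d, c] x) = 0"
  proof -
    have "(\<Sum>d\<in>UNIV. riem g x e a b d * ?N1 [d, c] x) + (\<Sum>d\<in>UNIV. riem g x a b e d * ?N1 [d, c] x)
      + (\<Sum>d\<in>UNIV. riem g x b e a d * ?N1 [d, c] x)
      = (\<Sum>d\<in>UNIV. (riem g x e a b d + riem g x a b e d + riem g x b e a d) * ?N1 [d, c] x)"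
      by (simp add: sum.distrib distrib_right)
    also have "\<dots> = 0" using B1 by simp
    finally show ?thesis .
  qed
  have "(\<Sum>d\<in>UNIV. (covD g [False, False, False, True] RT [e, a, b, c, d] x
        + covD g [False, False, False, True] RT [a, b, e, c, d] x
        + covD g [False, False, False, True] RT [b, e, a, c, d] x) * w [d] x)
     = (\<Sum>d\<in>UNIV. covD g [False, False, False, True] RT [e, a, b, c, d] x * w [d] x)
       + (\<Sum>d\<in>UNIV. covD g [False, False, False, True] RT [a, b, e, c, d] x * w [d] x)
       + (\<Sum>d\<in>UNIV. covD g [False, False, False, True] RT [b, e, a, c, d] x * w [d] x)"
    by (simp add: sum.distrib distrib_right)
  also have "\<dots> = 0"
    using I[of e a b c] I[of a b e c] I[of b e a c] J[of e a b c] J[of a b e c] J[of b e a c] S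
    by linarith
  finally show ?thesis .
qed

lemma bianchi2:
  assumes x: "x \<in> U"
  shows "covD g [False, False, False, True] RT [e, a, b, c, f] x
        + covD g [False, False, False, True] RT [a, b, e, c, f] x
        + covD g [False, False, False, True] RT [b, e, a, c, f] x = 0"
proof -
  have w: "smT (\<lambda>js y. if js ! 0 = f then 1 else 0)" by (simp add: smT_def)
  from bianchi2_w[OF x w, of e a b c] show ?thesis by simp
qed

lemma nablaR_anti:
  assumes x: "x \<in> U"
  shows "covD g [False, False, False, True] RT [c, d, a, b, e] x = - covD g [False, False, False, True] RT [c, a, d, b, e] x"
proof -
  have sA: "smT (\<lambda>js. RT [js ! 1, js ! 0, js ! 2, js ! 3])" by (simp add: smT_def RT_fun)
  have "covD g [False, False, False, True] RT [c, d, a, b, e] x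
     = covD g [False, False, False, True] (\<lambda>js y. - RT [js ! 1, js ! 0, js ! 2, js ! 3] y) [c, d, a, b, e] x"
  proof (rule covD_loc[OF x])
    fix js' :: "'n list" and y assume "length js' = length [d, a, b, e]" "y \<in> U"
    then obtain p q r s where "js' = [p, q, r, s]" using len4 by force
    then show "RT js' y = - RT [js' ! 1, js' ! 0, js' ! 2, js' ! 3] y" by (simp add: RT_def riem_anti1[of y p q])
  qed
  also have "\<dots> = - covD g [False, False, False, True] (\<lambda>js. RT [js ! 1, js ! 0, js ! 2, js ! 3]) [c, d, a, b, e] x"
    using covD_minus[OF x sA] by simp
  also have "\<dots> = - covD g [False, False, False, True] RT [c, a, d, b, e] x"
    by (simp only: sw4_01)
  finally show ?thesis .
qed

lemma bianchi2_contr: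
  assumes x: "x \<in> U"
  shows "(\<Sum>d\<in>UNIV. covD g [False, False, False, True] RT [d, a, c, b, d] x)
     = covD g [False, False] RicT [c, a, b] x - covD g [False, False] RicT [a, c, b] x"
proof -
  have "(\<Sum>d\<in>UNIV. covD g [False, False, False, True] RT [d, a, c, b, d] x
      + covD g [False, False, False, True] RT [a, c, d, b, d] x
      + covD g [False, False, False, True] RT [c, d, a, b, d] x) = 0"
    using bianchi2[OF x] by simp
  moreover have "(\<Sum>d\<in>UNIV. covD g [False, False, False, True] RT [c, d, a, b, d] x)
     = - covD g [False, False] RicT [c, a, b] x"
  proof -
    have "(\<Sum>d\<in>UNIV. covD g [False, False, False, True] RT [c, d, a, b, d] x)
        = (\<Sum>d\<in>UNIV. - covD g [False, False, False, True] RT [c, a, d, b, d] x)"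
      by (rule sum.cong[OF refl]) (rule nablaR_anti[OF x])
    also have "\<dots> = - covD g [False, False] RicT [c, a, b] x" by (simp only: sum_negf contr_Ric[OF x])
    finally show ?thesis .
  qed
  moreover have "(\<Sum>d\<in>UNIV. covD g [False, False, False, True] RT [a, c, d, b, d] x) = covD g [False, False] RicT [a, c, b] x"
    by (simp only: contr_Ric[OF x])
  ultimately show ?thesis by (simp only: sum.distrib)
qed

lemma nablaRic_sym:
  assumes x: "x \<in> U"
  shows "covD g [False, False] RicT [c, a, b] x = covD g [False, False] RicT [c, b, a] x"
proof -
  have "covD g [False, False] RicT [c, a, b] x = covD g [False, False] (\<lambda>js. RicT [js ! 1, js ! 0]) [c, a, b] x"
  proof (rule covD_loc[OF x])
    fix js' :: "'n list" and y assume "length js' = length [a, b]" "y \<in> U"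
    then obtain p q where "js' = [p, q]" using len2 by force
    then show "RicT js' y = RicT [js' ! 1, js' ! 0] y" using \<open>y \<in> U\<close> by (simp add: RicT_def ric_sym)
  qed
  also have "\<dots> = covD g [False, False] RicT [c, b, a] x" by (rule sw2)
  finally show ?thesis .
qed

end


context geo
begin

lemma t2_gt: "t2 (gt g) = gT"
  by (rule ext)+ (simp add: t2_def gt_def gT_def)

lemma gt_sm[simp]: "sm (gt g a b)"
proof -
  have "gt g a b = (\<lambda>y. g y $ a $ b)" by (rule ext) (simp add: gt_def)
  then show ?thesis by simp
qed

lemma lie2_g:
  assumes x: "x \<in> U" and W: "\<And>i. sm (\<lambda>y. W y $ i)"
  shows "lie2 W (gt g) a b x = covD g [False] (lowV W) [a, b] x + covD g [False] (lowV W) [b, a] x"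
proof -
  have "lie2 W (gt g) a b x = (\<Sum>c\<in>UNIV. gt g c b x * covD g [True] (vt W) [a, c] x) + (\<Sum>c\<in>UNIV. gt g a c x * covD g [True] (vt W) [b, c] x)"
    using lie2_torsionfree[OF x W, of "gt g" a b] nabla_g[OF x] by (simp add: t2_gt)
  also have "\<dots> = covD g [False] (lowV W) [a, b] x + covD g [False] (lowV W) [b, a] x"
    using lowV1[OF x W] g_sym[OF x] by (simp add: gt_def)
  finally show ?thesis .
qed

lemma nn_low:
  assumes x: "x \<in> U" and W: "\<And>i. sm (\<lambda>y. W y $ i)"
  shows "covD g [False, False] (covD g [False] (lowV W)) [d, c, b] x
     = (\<Sum>a\<in>UNIV. g x $ b $ a * covD g [False, True] (covD g [True] (vt W)) [d, c, a] x)"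
proof -
  have "covD g [False, False] (covD g [False] (lowV W)) [d, c, b] x
     = covD g [False, False] (\<lambda>js y. \<Sum>a\<in>UNIV. g y $ (js ! 1) $ a * covD g [True] (vt W) [js ! 0, a] y) [d, c, b] x"
  proof (rule covD_loc[OF x])
    fix js' :: "'n list" and y assume "length js' = length [c, b]" and y: "y \<in> U"
    then obtain p q where js': "js' = [p, q]" using len2 by force
    show "covD g [False] (lowV W) js' y = (\<Sum>a\<in>UNIV. g y $ (js' ! 1) $ a * covD g [True] (vt W) [js' ! 0, a] y)"
      using lowV1[OF y W, of p q] unfolding js' by simp
  qed
  also have "\<dots> = (\<Sum>a\<in>UNIV. g x $ b $ a * covD g [False, True] (covD g [True] (vt W)) [d, c, a] x)"
    using lowT2[OF x] W by simp
  finally show ?thesis .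
qed

lemma nnV_raise:
  assumes x: "x \<in> U" and W: "\<And>i. sm (\<lambda>y. W y $ i)"
  shows "covD g [False, True] (covD g [True] (vt W)) [d, c, a] x
     = (\<Sum>e\<in>UNIV. ginv g x $ a $ e * covD g [False, False] (covD g [False] (lowV W)) [d, c, e] x)"
proof -
  have "(\<Sum>e\<in>UNIV. ginv g x $ a $ e * covD g [False, False] (covD g [False] (lowV W)) [d, c, e] x)
     = (\<Sum>e\<in>UNIV. \<Sum>b\<in>UNIV. ginv g x $ a $ e * g x $ e $ b * covD g [False, True] (covD g [True] (vt W)) [d, c, b] x)"
    by (simp add: nn_low[OF x W] sum_distrib_left mult.assoc)
  also have "\<dots> = (\<Sum>b\<in>UNIV. (\<Sum>e\<in>UNIV. ginv g x $ a $ e * g x $ e $ b) * covD g [False, True] (covD g [True] (vt W)) [d, c, b] x)"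
    by (subst sum.swap) (simp add: sum_distrib_right)
  also have "\<dots> = covD g [False, True] (covD g [True] (vt W)) [d, c, a] x"
    by (simp add: ginv_left[OF x])
  finally show ?thesis by simp
qed

lemma divV_low:
  assumes x: "x \<in> U" and W: "\<And>i. sm (\<lambda>y. W y $ i)"
  shows "divV g W x = (\<Sum>a\<in>UNIV. \<Sum>c\<in>UNIV. ginv g x $ a $ c * covD g [False] (lowV W) [c, a] x)"
proof -
  have "(\<Sum>a\<in>UNIV. \<Sum>c\<in>UNIV. ginv g x $ a $ c * covD g [False] (lowV W) [c, a] x)
      = (\<Sum>a\<in>UNIV. \<Sum>c\<in>UNIV. \<Sum>e\<in>UNIV. ginv g x $ a $ c * g x $ a $ e * covD g [True] (vt W) [c, e] x)"
    by (simp add: lowV1[OF x W] sum_distrib_left mult.assoc)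
  also have "\<dots> = (\<Sum>c\<in>UNIV. \<Sum>e\<in>UNIV. (\<Sum>a\<in>UNIV. ginv g x $ c $ a * g x $ a $ e) * covD g [True] (vt W) [c, e] x)"
    apply (subst sum3_231)
    apply (simp add: sum_distrib_right mult.assoc)
    apply (simp add: ginv_sym[OF x])
    done
  also have "\<dots> = divV g W x"
    by (simp add: ginv_left[OF x] divV_def)
  finally show ?thesis by simp
qed

lemma divV_fun: "divV g W = (\<lambda>y. \<Sum>a\<in>UNIV. covD g [True] (vt W) [a, a] y)"
  by (rule ext) (simp add: divV_def)

lemma divV_sm[simp]: "(\<And>i. sm (\<lambda>y. W y $ i)) \<Longrightarrow> sm (divV g W)"
  unfolding divV_fun by simp

lemma A1:
  assumes x: "x \<in> U"
  shows "(\<Sum>a\<in>UNIV. \<Sum>c\<in>UNIV. ginv g x $ a $ c * (\<Sum>d\<in>UNIV. riem g x c e a d * lowV V [d] x))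
     = (\<Sum>b\<in>UNIV. ric g e b x * V x $ b)"
proof -
  have 1: "(\<Sum>d\<in>UNIV. riem g x c e a d * lowV V [d] x) = (\<Sum>b\<in>UNIV. Rl x e c b a * V x $ b)" for c a
  proof -
    have "(\<Sum>d\<in>UNIV. riem g x c e a d * lowV V [d] x) = (\<Sum>b\<in>UNIV. Rl x c e a b * V x $ b)"
      unfolding lowV_def Rl_def
      apply (simp add: sum_distrib_left sum_distrib_right mult.assoc)
      apply (subst sum.swap) apply simp
      done
    also have "\<dots> = (\<Sum>b\<in>UNIV. Rl x e c b a * V x $ b)"
    proof (rule sum.cong[OF refl])
      fix b
      have "Rl x c e a b = Rl x e c b a" using Rl_anti1[of x c e a b] Rl_anti2'[OF x, of e c a b] by simp
      then show "Rl x c e a b * V x $ b = Rl x e c b a * V x $ b" by simp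
    qed
    finally show ?thesis .
  qed
  have "(\<Sum>a\<in>UNIV. \<Sum>c\<in>UNIV. ginv g x $ a $ c * (\<Sum>d\<in>UNIV. riem g x c e a d * lowV V [d] x))
      = (\<Sum>a\<in>UNIV. \<Sum>c\<in>UNIV. \<Sum>b\<in>UNIV. ginv g x $ a $ c * Rl x e c b a * V x $ b)"
    by (simp add: 1 sum_distrib_left mult.assoc)
  also have "\<dots> = (\<Sum>b\<in>UNIV. (\<Sum>c\<in>UNIV. \<Sum>a\<in>UNIV. Rl x e c b a * ginv g x $ a $ c) * V x $ b)"
    apply (subst sum3_321)
    apply (simp add: sum_distrib_right sum_distrib_left mult_ac)
    done
  also have "\<dots> = (\<Sum>b\<in>UNIV. ric g e b x * V x $ b)"
    by (simp add: ric_Rl[OF x])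
  finally show ?thesis .
qed

lemma D_comp:
  assumes x: "x \<in> U" and V: "\<And>i. sm (\<lambda>y. V y $ i)"
  shows "covD g [False, False] (t2 (\<lambda>a b y. lie2 V (gt g) a b y - divV g V y * g y $ a $ b)) [c, a, e] x
    = covD g [False, False] (covD g [False] (lowV V)) [c, a, e] x + covD g [False, False] (covD g [False] (lowV V)) [c, e, a] x
      - pd c (divV g V) x * g x $ a $ e"
proof -
  let ?N1 = "covD g [False] (lowV V)"
  have s1: "smT ?N1" using V by simp
  have sA: "smT (\<lambda>js y. ?N1 js y + ?N1 [js ! 1, js ! 0] y)" unfolding smT_def using s1 by simp
  have sA1: "smT (\<lambda>js. ?N1 [js ! 1, js ! 0])" unfolding smT_def using s1 by simp
  have sB: "smT (\<lambda>js y. divV g V y * g y $ (js ! 0) $ (js ! 1))" unfolding smT_def using V by simp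
  have "covD g [False, False] (t2 (\<lambda>a b y. lie2 V (gt g) a b y - divV g V y * g y $ a $ b)) [c, a, e] x
     = covD g [False, False] (\<lambda>js y. (?N1 js y + ?N1 [js ! 1, js ! 0] y) - divV g V y * g y $ (js ! 0) $ (js ! 1)) [c, a, e] x"
  proof (rule covD_loc[OF x])
    fix js' :: "'n list" and y assume "length js' = length [a, e]" and y: "y \<in> U"
    then obtain p q where js': "js' = [p, q]" using len2 by force
    show "t2 (\<lambda>a b y. lie2 V (gt g) a b y - divV g V y * g y $ a $ b) js' y
       = (?N1 js' y + ?N1 [js' ! 1, js' ! 0] y) - divV g V y * g y $ (js' ! 0) $ (js' ! 1)"
      using lie2_g[OF y V, of p q] unfolding js' by (simp add: t2_def)
  qed
  also have "\<dots> = covD g [False, False] (\<lambda>js y. ?N1 js y + ?N1 [js ! 1, js ! 0] y) [c, a, e] x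
      - covD g [False, False] (\<lambda>js y. divV g V y * g y $ (js ! 0) $ (js ! 1)) [c, a, e] x"
    by (rule covD_diff[OF x sA sB])
  also have "covD g [False, False] (\<lambda>js y. ?N1 js y + ?N1 [js ! 1, js ! 0] y) [c, a, e] x
      = covD g [False, False] ?N1 [c, a, e] x + covD g [False, False] ?N1 [c, e, a] x"
    using covD_add[OF x s1 sA1] sw2 by simp
  also have "covD g [False, False] (\<lambda>js y. divV g V y * g y $ (js ! 0) $ (js ! 1)) [c, a, e] x
      = pd c (divV g V) x * g x $ a $ e"
    using scal_g[OF x] V by simp
  finally show ?thesis .
qed

lemma ginv_left': "x \<in> U \<Longrightarrow> (\<Sum>k\<in>UNIV. ginv g x $ k $ i * g x $ k $ j) = (if i = j then 1 else 0)"
  using ginv_left[of x i j] ginv_sym[of x] by simp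

lemma ident1_low:
  assumes x: "x \<in> U" and V: "\<And>i. sm (\<lambda>y. V y $ i)"
  shows "- (\<Sum>c\<in>UNIV. \<Sum>d\<in>UNIV. ginv g x $ c $ d * covD g [False, False] (covD g [False] (lowV V)) [c, d, e] x)
      + divT g (\<lambda>a b y. lie2 V (gt g) a b y - divV g V y * g y $ a $ b) e x
    = (\<Sum>b\<in>UNIV. ric g e b x * V x $ b)"
proof -
  let ?N1 = "covD g [False] (lowV V)"
  let ?N2 = "covD g [False, False] ?N1"
  have s0: "smT (lowV V)" using V by simp
  have s1: "smT ?N1" using V by simp
  have dphi: "pd e (divV g V) x = (\<Sum>a\<in>UNIV. \<Sum>c\<in>UNIV. ginv g x $ a $ c * ?N2 [e, c, a] x)"
  proof -
    have "pd e (divV g V) x = pd e (\<lambda>y. \<Sum>a\<in>UNIV. \<Sum>c\<in>UNIV. ginv g y $ a $ c * ?N1 [c, a] y) x"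
      by (rule pd_loc[OF x]) (simp add: divV_low V)
    also have "\<dots> = (\<Sum>a\<in>UNIV. \<Sum>c\<in>UNIV. ginv g x $ a $ c * ?N2 [e, c, a] x)"
      by (rule trace_ginv2[OF x s1])
    finally show ?thesis .
  qed
  have T3: "(\<Sum>a\<in>UNIV. \<Sum>c\<in>UNIV. ginv g x $ a $ c * (pd c (divV g V) x * g x $ a $ e)) = pd e (divV g V) x"
  proof -
    have "(\<Sum>a\<in>UNIV. \<Sum>c\<in>UNIV. ginv g x $ a $ c * (pd c (divV g V) x * g x $ a $ e))
        = (\<Sum>c\<in>UNIV. pd c (divV g V) x * (\<Sum>a\<in>UNIV. ginv g x $ a $ c * g x $ a $ e))"
      apply (subst sum.swap)
      apply (simp add: sum_distrib_left mult_ac)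
      done
    also have "\<dots> = pd e (divV g V) x" by (simp add: ginv_left'[OF x])
    finally show ?thesis .
  qed
  have R1: "?N2 [c, e, a] x = ?N2 [e, c, a] x + (\<Sum>d\<in>UNIV. riem g x c e a d * lowV V [d] x)" for c a
    using ricci1[OF x s0, of c e a] by simp
  have sw: "(\<Sum>a\<in>UNIV. \<Sum>c\<in>UNIV. ginv g x $ a $ c * ?N2 [c, a, e] x) = (\<Sum>c\<in>UNIV. \<Sum>d\<in>UNIV. ginv g x $ c $ d * ?N2 [c, d, e] x)"
    apply (subst sum.swap)
    apply (simp add: ginv_sym[OF x])
    done
  have "divT g (\<lambda>a b y. lie2 V (gt g) a b y - divV g V y * g y $ a $ b) e x
     = (\<Sum>a\<in>UNIV. \<Sum>c\<in>UNIV. ginv g x $ a $ c * (?N2 [c, a, e] x + ?N2 [c, e, a] x - pd c (divV g V) x * g x $ a $ e))"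
    unfolding divT_def using D_comp[OF x V] by simp
  also have "\<dots> = (\<Sum>a\<in>UNIV. \<Sum>c\<in>UNIV. ginv g x $ a $ c * ?N2 [c, a, e] x)
      + (\<Sum>a\<in>UNIV. \<Sum>c\<in>UNIV. ginv g x $ a $ c * ?N2 [e, c, a] x)
      + (\<Sum>a\<in>UNIV. \<Sum>c\<in>UNIV. ginv g x $ a $ c * (\<Sum>d\<in>UNIV. riem g x c e a d * lowV V [d] x))
      - (\<Sum>a\<in>UNIV. \<Sum>c\<in>UNIV. ginv g x $ a $ c * (pd c (divV g V) x * g x $ a $ e))"
    by (simp add: R1 distrib_left right_diff_distrib sum.distrib sum_subtractf)
  also have "\<dots> = (\<Sum>c\<in>UNIV. \<Sum>d\<in>UNIV. ginv g x $ c $ d * ?N2 [c, d, e] x) + (\<Sum>b\<in>UNIV. ric g e b x * V x $ b)"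
    unfolding T3 dphi sw A1[OF x] by simp
  finally show ?thesis by simp
qed

lemma ident1:
  assumes x: "x \<in> U" and V: "\<And>i. sm (\<lambda>y. V y $ i)"
  shows "boxV g V x + raise g (divT g (\<lambda>a b y. lie2 V (gt g) a b y - divV g V y * g y $ a $ b)) x = ricV g V x"
proof -
  let ?N2 = "covD g [False, False] (covD g [False] (lowV V))"
  let ?D = "divT g (\<lambda>a b y. lie2 V (gt g) a b y - divV g V y * g y $ a $ b)"
  let ?X = "\<lambda>e. - (\<Sum>c\<in>UNIV. \<Sum>d\<in>UNIV. ginv g x $ c $ d * ?N2 [c, d, e] x)"
  have bx: "boxV g V x $ a = (\<Sum>e\<in>UNIV. ginv g x $ a $ e * ?X e)" for a
  proof -
    have "boxV g V x $ a = - (\<Sum>c\<in>UNIV. \<Sum>d\<in>UNIV. \<Sum>e\<in>UNIV. ginv g x $ c $ d * (ginv g x $ a $ e * ?N2 [c, d, e] x))"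
      by (simp add: boxV_def nnV_raise[OF x V] sum_distrib_left)
    also have "\<dots> = (\<Sum>e\<in>UNIV. ginv g x $ a $ e * ?X e)"
      apply (subst sum3_312)
      apply (simp add: sum_distrib_left sum_negf mult_ac)
      done
    finally show ?thesis .
  qed
  show ?thesis
  proof (subst vec_eq_iff, rule allI)
    fix a
    have "(boxV g V x + raise g ?D x) $ a = (\<Sum>e\<in>UNIV. ginv g x $ a $ e * (?X e + ?D e x))"
      by (simp add: bx raise_def distrib_left sum.distrib sum_negf right_diff_distrib sum_subtractf)
    also have "\<dots> = (\<Sum>e\<in>UNIV. ginv g x $ a $ e * (\<Sum>b\<in>UNIV. ric g e b x * V x $ b))"
      using ident1_low[OF x V] by simp
    also have "\<dots> = ricV g V x $ a"
      apply (simp add: ricV_def sum_distrib_left mult_ac)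
      apply (subst sum.swap) apply simp
      done
    finally show "(boxV g V x + raise g ?D x) $ a = ricV g V x $ a" .
  qed
qed

end


context geo
begin

lemma boxV_sm[simp]: "(\<And>i. sm (\<lambda>y. W y $ i)) \<Longrightarrow> sm (\<lambda>y. boxV g W y $ a)"
  unfolding boxV_def by simp

lemma ricV_sm[simp]: "(\<And>i. sm (\<lambda>y. W y $ i)) \<Longrightarrow> sm (\<lambda>y. ricV g W y $ a)"
  unfolding ricV_def by simp

lemma E1:
  assumes x: "x \<in> U" and V: "\<And>i. sm (\<lambda>y. V y $ i)"
  shows "boxT g (lie2 V (gt g)) a b x = - (\<Sum>c\<in>UNIV. \<Sum>d\<in>UNIV. ginv g x $ c $ d *
     (covD g [False, False, False] (covD g [False, False] (covD g [False] (lowV V))) [c, d, a, b] x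
      + covD g [False, False, False] (covD g [False, False] (covD g [False] (lowV V))) [c, d, b, a] x))"
proof -
  let ?N1 = "covD g [False] (lowV V)"
  let ?N2 = "covD g [False, False] ?N1"
  have s1: "smT ?N1" using V by simp
  have s2: "smT ?N2" using V by simp
  have sA1: "smT (\<lambda>js. ?N1 [js ! 1, js ! 0])" unfolding smT_def using s1 by simp
  have sB1: "smT (\<lambda>js. ?N2 [js ! 0, js ! 2, js ! 1])" unfolding smT_def using s2 by simp
  have step: "covD g [False, False] (t2 (lie2 V (gt g))) js y = ?N2 js y + ?N2 [js ! 0, js ! 2, js ! 1] y"
    if y: "y \<in> U" and l: "length js = Suc (Suc (Suc 0))" for js y
  proof -
    obtain d a' b' where js: "js = [d, a', b']" using len3[OF l] by blast
    have "covD g [False, False] (t2 (lie2 V (gt g))) [d, a', b'] y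
       = covD g [False, False] (\<lambda>js y. ?N1 js y + ?N1 [js ! 1, js ! 0] y) [d, a', b'] y"
    proof (rule covD_loc[OF y])
      fix js' :: "'n list" and z assume "length js' = length [a', b']" and z: "z \<in> U"
      then obtain p q where js': "js' = [p, q]" using len2 by force
      show "t2 (lie2 V (gt g)) js' z = ?N1 js' z + ?N1 [js' ! 1, js' ! 0] z"
        using lie2_g[OF z V, of p q] unfolding js' by (simp add: t2_def)
    qed
    also have "\<dots> = ?N2 [d, a', b'] y + ?N2 [d, b', a'] y"
      using covD_add[OF y s1 sA1] sw2 by simp
    finally show ?thesis using js by simp
  qed
  have "covD g [False, False, False] (covD g [False, False] (t2 (lie2 V (gt g)))) [c, d, a, b] x
     = covD g [False, False, False] (\<lambda>js y. ?N2 js y + ?N2 [js ! 0, js ! 2, js ! 1] y) [c, d, a, b] x" for c d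
    by (rule covD_loc[OF x]) (simp add: step)
  also have "\<dots> c d = covD g [False, False, False] ?N2 [c, d, a, b] x + covD g [False, False, False] ?N2 [c, d, b, a] x" for c d
    using covD_add[OF x s2 sB1] sw3_12 by simp
  finally show ?thesis unfolding boxT_def by simp
qed

lemma lowV_boxV:
  assumes y: "y \<in> U" and V: "\<And>i. sm (\<lambda>y. V y $ i)"
  shows "lowV (boxV g V) [b] y = - (\<Sum>c\<in>UNIV. \<Sum>d\<in>UNIV. ginv g y $ c $ d * covD g [False, False] (covD g [False] (lowV V)) [c, d, b] y)"
proof -
  have "lowV (boxV g V) [b] y = - (\<Sum>a\<in>UNIV. \<Sum>c\<in>UNIV. \<Sum>d\<in>UNIV. g y $ b $ a * (ginv g y $ c $ d * covD g [False, True] (covD g [True] (vt V)) [c, d, a] y))"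
    by (simp add: lowV_def boxV_def sum_distrib_left sum_negf)
  also have "\<dots> = - (\<Sum>c\<in>UNIV. \<Sum>d\<in>UNIV. ginv g y $ c $ d * (\<Sum>a\<in>UNIV. g y $ b $ a * covD g [False, True] (covD g [True] (vt V)) [c, d, a] y))"
    apply (subst sum3_231)
    apply (simp add: sum_distrib_left mult_ac)
    done
  also have "\<dots> = - (\<Sum>c\<in>UNIV. \<Sum>d\<in>UNIV. ginv g y $ c $ d * covD g [False, False] (covD g [False] (lowV V)) [c, d, b] y)"
    by (simp add: nn_low[OF y V])
  finally show ?thesis .
qed

lemma E2:
  assumes x: "x \<in> U" and V: "\<And>i. sm (\<lambda>y. V y $ i)"
  shows "(\<Sum>c\<in>UNIV. \<Sum>d\<in>UNIV. ginv g x $ c $ d *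
      covD g [False, False, False] (covD g [False, False] (covD g [False] (lowV V))) [c, d, a, b] x)
   = - covD g [False] (lowV (boxV g V)) [a, b] x
     + (\<Sum>c\<in>UNIV. \<Sum>d\<in>UNIV. ginv g x $ c $ d *
        ((\<Sum>e\<in>UNIV. riem g x c a d e * covD g [False] (lowV V) [e, b] x)
        + (\<Sum>e\<in>UNIV. riem g x c a b e * covD g [False] (lowV V) [d, e] x)
        + (\<Sum>e\<in>UNIV. covD g [False, False, False, True] RT [c, d, a, b, e] x * lowV V [e] x)
        + (\<Sum>e\<in>UNIV. riem g x d a b e * covD g [False] (lowV V) [c, e] x)))"
proof -
  let ?N1 = "covD g [False] (lowV V)"
  let ?N2 = "covD g [False, False] ?N1"
  let ?N3 = "covD g [False, False, False] ?N2"
  have s0: "smT (lowV V)" using V by simp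
  have s1: "smT ?N1" using V by simp
  have s2: "smT ?N2" using V by simp
  have sL: "smT (lowV (boxV g V))" using V by simp
  let ?X = "\<lambda>c d. (\<Sum>e\<in>UNIV. riem g x c a d e * ?N1 [e, b] x)
        + (\<Sum>e\<in>UNIV. riem g x c a b e * ?N1 [d, e] x)
        + (\<Sum>e\<in>UNIV. covD g [False, False, False, True] RT [c, d, a, b, e] x * lowV V [e] x)
        + (\<Sum>e\<in>UNIV. riem g x d a b e * ?N1 [c, e] x)"
  have n3: "?N3 [c, d, a, b] x = ?N3 [a, c, d, b] x + ?X c d" for c d
    using ricci1_cov[OF x s0, of c d a b] ricci2[OF x s1, of c a d b] by simp
  have tr: "(\<Sum>c\<in>UNIV. \<Sum>d\<in>UNIV. ginv g x $ c $ d * ?N3 [a, c, d, b] x) = - covD g [False] (lowV (boxV g V)) [a, b] x"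
  proof -
    have "(\<Sum>c\<in>UNIV. \<Sum>d\<in>UNIV. ginv g x $ c $ d * ?N3 [a, c, d, b] x)
        = covD g [False] (\<lambda>js y. \<Sum>c\<in>UNIV. \<Sum>d\<in>UNIV. ginv g y $ c $ d * ?N2 [c, d, js ! 0] y) [a, b] x"
      by (rule trace_ginv3[OF x s2, symmetric])
    also have "\<dots> = covD g [False] (\<lambda>js y. - lowV (boxV g V) js y) [a, b] x"
    proof (rule covD_loc[OF x])
      fix js' :: "'n list" and y assume "length js' = length [b]" and y: "y \<in> U"
      then obtain p where js': "js' = [p]" using len1 by force
      show "(\<Sum>c\<in>UNIV. \<Sum>d\<in>UNIV. ginv g y $ c $ d * ?N2 [c, d, js' ! 0] y) = - lowV (boxV g V) js' y"
        using lowV_boxV[OF y V, of p] unfolding js' by simp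
    qed
    also have "\<dots> = - covD g [False] (lowV (boxV g V)) [a, b] x"
      by (rule covD_minus[OF x sL])
    finally show ?thesis .
  qed
  have "(\<Sum>c\<in>UNIV. \<Sum>d\<in>UNIV. ginv g x $ c $ d * ?N3 [c, d, a, b] x)
     = (\<Sum>c\<in>UNIV. \<Sum>d\<in>UNIV. ginv g x $ c $ d * ?N3 [a, c, d, b] x) + (\<Sum>c\<in>UNIV. \<Sum>d\<in>UNIV. ginv g x $ c $ d * ?X c d)"
    by (simp only: n3 distrib_left sum.distrib)
  then show ?thesis unfolding tr by simp
qed

lemma t2_ric: "t2 (ric g) = RicT"
  by (rule ext)+ (simp add: t2_def RicT_def)

lemma E8:
  assumes x: "x \<in> U" and V: "\<And>i. sm (\<lambda>y. V y $ i)"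
  shows "lie2 V (ric g) a b x = (\<Sum>c\<in>UNIV. V x $ c * covD g [False, False] RicT [c, a, b] x)
     + (\<Sum>c\<in>UNIV. ric g c b x * covD g [True] (vt V) [a, c] x) + (\<Sum>c\<in>UNIV. ric g a c x * covD g [True] (vt V) [b, c] x)"
  using lie2_torsionfree[OF x V, of "ric g" a b] by (simp add: t2_ric)

lemma lowV_ricV:
  assumes y: "y \<in> U"
  shows "lowV (ricV g V) [b] y = (\<Sum>d\<in>UNIV. ric g b d y * V y $ d)"
proof -
  have "lowV (ricV g V) [b] y = (\<Sum>d\<in>UNIV. \<Sum>c\<in>UNIV. (\<Sum>a\<in>UNIV. g y $ b $ a * ginv g y $ a $ c) * (ric g c d y * V y $ d))"
    unfolding lowV_def ricV_def
    apply (simp add: sum_distrib_left sum_distrib_right mult_ac)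
    apply (subst sum3_231)
    apply (simp add: mult_ac)
    done
  also have "\<dots> = (\<Sum>d\<in>UNIV. ric g b d y * V y $ d)"
    by (simp add: ginv_right[OF y])
  finally show ?thesis .
qed

lemma E9:
  assumes x: "x \<in> U" and V: "\<And>i. sm (\<lambda>y. V y $ i)"
  shows "covD g [False] (lowV (ricV g V)) [a, b] x = (\<Sum>d\<in>UNIV. covD g [False, False] RicT [a, b, d] x * V x $ d)
      + (\<Sum>d\<in>UNIV. ric g b d x * covD g [True] (vt V) [a, d] x)"
proof -
  have "covD g [False] (lowV (ricV g V)) [a, b] x = covD g [False] (\<lambda>js y. \<Sum>d\<in>UNIV. ric g (js ! 0) d y * V y $ d) [a, b] x"
  proof (rule covD_loc[OF x])
    fix js' :: "'n list" and y assume "length js' = length [b]" and y: "y \<in> U"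
    then obtain p where js': "js' = [p]" using len1 by force
    show "lowV (ricV g V) js' y = (\<Sum>d\<in>UNIV. ric g (js' ! 0) d y * V y $ d)"
      using lowV_ricV[OF y] unfolding js' by simp
  qed
  also have "\<dots> = (\<Sum>d\<in>UNIV. covD g [False, False] RicT [a, b, d] x * V x $ d)
      + (\<Sum>d\<in>UNIV. ric g b d x * covD g [True] (vt V) [a, d] x)"
    by (rule leib_RicW[OF x V])
  finally show ?thesis .
qed

lemma N1_contr:
  assumes x: "x \<in> U" and V: "\<And>i. sm (\<lambda>y. V y $ i)"
  shows "(\<Sum>c\<in>UNIV. ginv g x $ c $ d * covD g [False] (lowV V) [b, c] x) = covD g [True] (vt V) [b, d] x"
proof -
  have "(\<Sum>c\<in>UNIV. ginv g x $ c $ d * covD g [False] (lowV V) [b, c] x)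
      = (\<Sum>f\<in>UNIV. (\<Sum>c\<in>UNIV. ginv g x $ d $ c * g x $ c $ f) * covD g [True] (vt V) [b, f] x)"
    apply (simp add: lowV1[OF x V] sum_distrib_left sum_distrib_right mult_ac)
    apply (subst sum.swap)
    apply (simp add: ginv_sym[OF x, of _ d])
    done
  also have "\<dots> = covD g [True] (vt V) [b, d] x" by (simp add: ginv_left[OF x])
  finally show ?thesis .
qed

lemma E10:
  assumes x: "x \<in> U" and V: "\<And>i. sm (\<lambda>y. V y $ i)"
  shows "ricT g (lie2 V (gt g)) a b x = (\<Sum>c\<in>UNIV. \<Sum>d\<in>UNIV. ginv g x $ c $ d * ric g a d x * covD g [False] (lowV V) [c, b] x)
     + (\<Sum>d\<in>UNIV. ric g a d x * covD g [True] (vt V) [b, d] x)"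
proof -
  have "ricT g (lie2 V (gt g)) a b x = (\<Sum>c\<in>UNIV. \<Sum>d\<in>UNIV. ginv g x $ c $ d * ric g a d x * covD g [False] (lowV V) [c, b] x)
     + (\<Sum>c\<in>UNIV. \<Sum>d\<in>UNIV. ginv g x $ c $ d * ric g a d x * covD g [False] (lowV V) [b, c] x)"
    by (simp add: ricT_def lie2_g[OF x V] distrib_left sum.distrib)
  also have "(\<Sum>c\<in>UNIV. \<Sum>d\<in>UNIV. ginv g x $ c $ d * ric g a d x * covD g [False] (lowV V) [b, c] x)
      = (\<Sum>d\<in>UNIV. ric g a d x * (\<Sum>c\<in>UNIV. ginv g x $ c $ d * covD g [False] (lowV V) [b, c] x))"
    apply (subst sum.swap)
    apply (simp add: sum_distrib_left mult_ac)
    done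
  also have "\<dots> = (\<Sum>d\<in>UNIV. ric g a d x * covD g [True] (vt V) [b, d] x)"
    by (simp add: N1_contr[OF x V])
  finally show ?thesis .
qed

lemma A2:
  assumes x: "x \<in> U"
  shows "(\<Sum>c\<in>UNIV. \<Sum>d\<in>UNIV. ginv g x $ c $ d * riem g x c a d e) = (\<Sum>k\<in>UNIV. ric g a k x * ginv g x $ k $ e)"
proof -
  have "(\<Sum>c\<in>UNIV. \<Sum>d\<in>UNIV. ginv g x $ c $ d * riem g x c a d e)
     = (\<Sum>c\<in>UNIV. \<Sum>d\<in>UNIV. \<Sum>k\<in>UNIV. ginv g x $ c $ d * Rl x a c k d * ginv g x $ k $ e)"
  proof (intro sum.cong refl)
    fix c d
    have "Rl x c a d k = Rl x a c k d" for k using Rl_anti1[of x c a d k] Rl_anti2'[OF x, of a c d k] by simp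
    then have "riem g x c a d e = (\<Sum>k\<in>UNIV. Rl x a c k d * ginv g x $ k $ e)"
      using riem_raise[OF x, of c a d e] by simp
    then show "ginv g x $ c $ d * riem g x c a d e = (\<Sum>k\<in>UNIV. ginv g x $ c $ d * Rl x a c k d * ginv g x $ k $ e)"
      by (simp add: sum_distrib_left mult.assoc)
  qed
  also have "\<dots> = (\<Sum>k\<in>UNIV. (\<Sum>c\<in>UNIV. \<Sum>d\<in>UNIV. Rl x a c k d * ginv g x $ d $ c) * ginv g x $ k $ e)"
    apply (simp only: sum_distrib_right)
    apply (subst sum3_312[of "\<lambda>c d k. ginv g x $ c $ d * Rl x a c k d * ginv g x $ k $ e"])
    apply (intro sum.cong refl)
    apply (simp add: ginv_sym[OF x])
    done
  also have "\<dots> = (\<Sum>k\<in>UNIV. ric g a k x * ginv g x $ k $ e)" by (simp add: ric_Rl[OF x])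
  finally show ?thesis .
qed

lemma E4:
  assumes x: "x \<in> U"
  shows "(\<Sum>c\<in>UNIV. \<Sum>d\<in>UNIV. ginv g x $ c $ d * (\<Sum>e\<in>UNIV. riem g x c a d e * N [e, b] x))
     = (\<Sum>c\<in>UNIV. \<Sum>d\<in>UNIV. ginv g x $ c $ d * ric g a d x * N [c, b] x)"
proof -
  have "(\<Sum>c\<in>UNIV. \<Sum>d\<in>UNIV. ginv g x $ c $ d * (\<Sum>e\<in>UNIV. riem g x c a d e * N [e, b] x))
      = (\<Sum>e\<in>UNIV. (\<Sum>c\<in>UNIV. \<Sum>d\<in>UNIV. ginv g x $ c $ d * riem g x c a d e) * N [e, b] x)"
    apply (simp only: sum_distrib_left sum_distrib_right)
    apply (subst sum3_312[of "\<lambda>c d e. ginv g x $ c $ d * (riem g x c a d e * N [e, b] x)"])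
    apply (intro sum.cong refl)
    apply (simp add: mult_ac)
    done
  also have "\<dots> = (\<Sum>e\<in>UNIV. \<Sum>k\<in>UNIV. ric g a k x * ginv g x $ k $ e * N [e, b] x)"
    by (simp add: A2[OF x] sum_distrib_right)
  also have "\<dots> = (\<Sum>c\<in>UNIV. \<Sum>d\<in>UNIV. ginv g x $ c $ d * ric g a d x * N [c, b] x)"
    apply (intro sum.cong refl)
    apply (simp add: ginv_sym[OF x] mult_ac)
    done
  finally show ?thesis .
qed

definition Wt :: "('n list \<Rightarrow> real^'n \<Rightarrow> real) \<Rightarrow> real^'n \<Rightarrow> 'n \<Rightarrow> 'n \<Rightarrow> real" where
  "Wt N x a b = (\<Sum>c\<in>UNIV. \<Sum>d\<in>UNIV. \<Sum>e\<in>UNIV. ginv g x $ c $ e * riem g x e a b d * N [c, d] x)"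

lemma E5a:
  assumes x: "x \<in> U"
  shows "(\<Sum>c\<in>UNIV. \<Sum>d\<in>UNIV. ginv g x $ c $ d * (\<Sum>e\<in>UNIV. riem g x c a b e * N [d, e] x)) = Wt N x a b"
  unfolding Wt_def
  apply (simp only: sum_distrib_left)
  apply (subst sum3_312[of "\<lambda>c d e. ginv g x $ c $ e * riem g x e a b d * N [c, d] x"])
  apply (intro sum.cong refl)
  apply (simp add: ginv_sym[OF x] mult_ac)
  done

lemma E5b:
  assumes x: "x \<in> U"
  shows "(\<Sum>c\<in>UNIV. \<Sum>d\<in>UNIV. ginv g x $ c $ d * (\<Sum>e\<in>UNIV. riem g x d a b e * N [c, e] x)) = Wt N x a b"
  unfolding Wt_def
  apply (simp only: sum_distrib_left)
  apply (subst sum3_132[of "\<lambda>c d e. ginv g x $ c $ e * riem g x e a b d * N [c, d] x"])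
  apply (intro sum.cong refl)
  apply (simp add: mult_ac)
  done

lemma PM:
  assumes x: "x \<in> U"
  shows "(\<Sum>e\<in>UNIV. ginv g x $ d $ e * riem g x a e b c) = (\<Sum>e\<in>UNIV. ginv g x $ c $ e * riem g x b e a d)"
proof -
  have L: "(\<Sum>e\<in>UNIV. ginv g x $ d $ e * riem g x a e b c) = (\<Sum>e\<in>UNIV. \<Sum>f\<in>UNIV. ginv g x $ d $ e * Rl x a e b f * ginv g x $ f $ c)"
    by (simp add: riem_raise[OF x, of a _ b c] sum_distrib_left mult.assoc)
  have R: "(\<Sum>e\<in>UNIV. ginv g x $ c $ e * riem g x b e a d) = (\<Sum>e\<in>UNIV. \<Sum>f\<in>UNIV. ginv g x $ c $ e * Rl x b e a f * ginv g x $ f $ d)"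
    by (simp add: riem_raise[OF x, of b _ a d] sum_distrib_left mult.assoc)
  have "(\<Sum>e\<in>UNIV. \<Sum>f\<in>UNIV. ginv g x $ c $ e * Rl x b e a f * ginv g x $ f $ d)
      = (\<Sum>f\<in>UNIV. \<Sum>e\<in>UNIV. ginv g x $ c $ e * Rl x b e a f * ginv g x $ f $ d)"
    by (rule sum.swap)
  also have "\<dots> = (\<Sum>e\<in>UNIV. \<Sum>f\<in>UNIV. ginv g x $ d $ e * Rl x a e b f * ginv g x $ f $ c)"
  proof (intro sum.cong refl)
    fix e f
    have "Rl x b f a e = Rl x a e b f" by (rule Rl_pair[OF x])
    then show "ginv g x $ c $ f * Rl x b f a e * ginv g x $ e $ d = ginv g x $ d $ e * Rl x a e b f * ginv g x $ f $ c"
      using ginv_sym[OF x, of c f] ginv_sym[OF x, of e d] by (simp add: mult_ac)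
  qed
  finally show ?thesis using L R by simp
qed

lemma E6:
  assumes x: "x \<in> U"
  shows "(\<Sum>c\<in>UNIV. \<Sum>d\<in>UNIV. \<Sum>e\<in>UNIV. ginv g x $ c $ e * riem g x a e b d * (N [c, d] x + N [d, c] x))
     = - (Wt N x a b + Wt N x b a)"
proof -
  have 1: "(\<Sum>c\<in>UNIV. \<Sum>d\<in>UNIV. \<Sum>e\<in>UNIV. ginv g x $ c $ e * riem g x a e b d * N [c, d] x) = - Wt N x a b"
    unfolding Wt_def by (simp add: riem_anti1[of x a] sum_negf)
  have "(\<Sum>c\<in>UNIV. \<Sum>d\<in>UNIV. \<Sum>e\<in>UNIV. ginv g x $ c $ e * riem g x a e b d * N [d, c] x)
      = (\<Sum>c\<in>UNIV. \<Sum>d\<in>UNIV. (\<Sum>e\<in>UNIV. ginv g x $ c $ e * riem g x a e b d) * N [d, c] x)"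
    by (simp add: sum_distrib_right)
  also have "\<dots> = (\<Sum>c\<in>UNIV. \<Sum>d\<in>UNIV. (\<Sum>e\<in>UNIV. ginv g x $ d $ e * riem g x b e a c) * N [d, c] x)"
    by (simp add: PM[OF x])
  also have "\<dots> = (\<Sum>d\<in>UNIV. \<Sum>c\<in>UNIV. (\<Sum>e\<in>UNIV. ginv g x $ d $ e * riem g x b e a c) * N [d, c] x)"
    by (rule sum.swap)
  also have "\<dots> = - Wt N x b a"
    unfolding Wt_def
    apply (simp only: sum_distrib_right sum_negf[symmetric])
    apply (intro sum.cong refl)
    apply (simp add: riem_anti1[of x b])
    done
  finally have 2: "(\<Sum>c\<in>UNIV. \<Sum>d\<in>UNIV. \<Sum>e\<in>UNIV. ginv g x $ c $ e * riem g x a e b d * N [d, c] x) = - Wt N x b a" .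
  show ?thesis using 1 2 by (simp add: distrib_left sum.distrib)
qed

lemma YZ:
  assumes y: "y \<in> U"
  shows "(\<Sum>e\<in>UNIV. riem g y d a b e * lowV V [e] y) = - (\<Sum>e\<in>UNIV. \<Sum>k\<in>UNIV. g y $ d $ k * riem g y b e a k * V y $ e)"
proof -
  have L: "(\<Sum>e\<in>UNIV. riem g y d a b e * lowV V [e] y) = (\<Sum>f\<in>UNIV. Rl y d a b f * V y $ f)"
    unfolding lowV_def Rl_def
    apply (simp only: sum_distrib_left sum_distrib_right)
    apply (subst sum.swap)
    apply (intro sum.cong refl)
    apply (simp add: mult_ac)
    done
  have R: "(\<Sum>e\<in>UNIV. \<Sum>k\<in>UNIV. g y $ d $ k * riem g y b e a k * V y $ e) = (\<Sum>e\<in>UNIV. Rl y b e a d * V y $ e)"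
    unfolding Rl_def
    apply (simp only: sum_distrib_right)
    apply (intro sum.cong refl)
    apply (simp add: g_sym[OF y, of d] mult_ac)
    done
  have "Rl y b e a d = - Rl y d a b e" for e
    using Rl_pair[OF y, of b e a d] Rl_anti1[of y a d b e] by simp
  then show ?thesis unfolding L R by (simp add: sum_negf)
qed

lemma contr_gg:
  assumes x: "x \<in> U"
  shows "(\<Sum>d\<in>UNIV. ginv g x $ c $ d * (\<Sum>e\<in>UNIV. \<Sum>k\<in>UNIV. g x $ d $ k * F e k)) = (\<Sum>e\<in>UNIV. F e c)"
proof -
  have "(\<Sum>d\<in>UNIV. ginv g x $ c $ d * (\<Sum>e\<in>UNIV. \<Sum>k\<in>UNIV. g x $ d $ k * F e k))
      = (\<Sum>e\<in>UNIV. \<Sum>k\<in>UNIV. (\<Sum>d\<in>UNIV. ginv g x $ c $ d * g x $ d $ k) * F e k)"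
    apply (simp only: sum_distrib_left sum_distrib_right)
    apply (subst sum3_231[of "\<lambda>d e k. ginv g x $ c $ d * (g x $ d $ k * F e k)"])
    apply (intro sum.cong refl)
    apply (simp add: mult_ac)
    done
  also have "\<dots> = (\<Sum>e\<in>UNIV. F e c)" by (simp add: ginv_left[OF x])
  finally show ?thesis .
qed

lemma PZ:
  assumes x: "x \<in> U" and V: "\<And>i. sm (\<lambda>y. V y $ i)"
  shows "(\<Sum>c\<in>UNIV. \<Sum>d\<in>UNIV. ginv g x $ c $ d * (\<Sum>e\<in>UNIV. riem g x d a b e * covD g [False] (lowV V) [c, e] x))
     = - (\<Sum>c\<in>UNIV. \<Sum>e\<in>UNIV. riem g x b e a c * covD g [True] (vt V) [c, e] x)"
proof -
  have 1: "(\<Sum>e\<in>UNIV. riem g x d a b e * covD g [False] (lowV V) [c, e] x) = - (\<Sum>f\<in>UNIV. Rl x b f a d * covD g [True] (vt V) [c, f] x)" for c d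
  proof -
    have "(\<Sum>e\<in>UNIV. riem g x d a b e * covD g [False] (lowV V) [c, e] x) = (\<Sum>f\<in>UNIV. Rl x d a b f * covD g [True] (vt V) [c, f] x)"
      unfolding lowV1[OF x V] Rl_def
      apply (simp only: sum_distrib_left sum_distrib_right)
      apply (subst sum.swap)
      apply (intro sum.cong refl)
      apply (simp add: mult_ac)
      done
    moreover have "Rl x d a b f = - Rl x b f a d" for f
      using Rl_pair[OF x, of d a b f] Rl_anti2'[OF x, of b f d a] by simp
    ultimately show ?thesis by (simp add: sum_negf)
  qed
  have "(\<Sum>c\<in>UNIV. \<Sum>d\<in>UNIV. ginv g x $ c $ d * (\<Sum>e\<in>UNIV. riem g x d a b e * covD g [False] (lowV V) [c, e] x))
     = - (\<Sum>c\<in>UNIV. \<Sum>f\<in>UNIV. (\<Sum>d\<in>UNIV. Rl x b f a d * ginv g x $ d $ c) * covD g [True] (vt V) [c, f] x)"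
    unfolding 1
    apply (simp only: sum_distrib_left sum_distrib_right sum_negf[symmetric] mult_minus_right)
    apply (subst sum3_132[of "\<lambda>c d f. - (ginv g x $ c $ d * (Rl x b f a d * covD g [True] (vt V) [c, f] x))"])
    apply (intro sum.cong refl)
    apply (simp add: ginv_sym[OF x] mult_ac)
    done
  also have "\<dots> = - (\<Sum>c\<in>UNIV. \<Sum>e\<in>UNIV. riem g x b e a c * covD g [True] (vt V) [c, e] x)"
    by (simp add: riem_raise[OF x, of b _ a])
  finally show ?thesis .
qed

lemma E7:
  assumes x: "x \<in> U" and V: "\<And>i. sm (\<lambda>y. V y $ i)"
  shows "(\<Sum>c\<in>UNIV. \<Sum>d\<in>UNIV. ginv g x $ c $ d * (\<Sum>e\<in>UNIV. covD g [False, False, False, True] RT [c, d, a, b, e] x * lowV V [e] x))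
     = - (\<Sum>e\<in>UNIV. V x $ e * (covD g [False, False] RicT [e, b, a] x - covD g [False, False] RicT [b, e, a] x))"
proof -
  let ?Y = "\<lambda>js y. \<Sum>e\<in>UNIV. riem g y (js ! 0) (js ! 1) (js ! 2) e * lowV V [e] y"
  let ?Z = "\<lambda>js y. \<Sum>e\<in>UNIV. \<Sum>k\<in>UNIV. g y $ (js ! 0) $ k * riem g y (js ! 2) e (js ! 1) k * V y $ e"
  let ?N1 = "covD g [False] (lowV V)"
  let ?nV = "covD g [True] (vt V)"
  let ?DR = "covD g [False, False, False, True] RT"
  have s0: "smT (lowV V)" using V by simp
  have sZ: "smT ?Z" unfolding smT_def using V by simp
  have YZc: "covD g [False, False, False] ?Y [c, d, a, b] x = - covD g [False, False, False] ?Z [c, d, a, b] x" for c d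
  proof -
    have "covD g [False, False, False] ?Y [c, d, a, b] x = covD g [False, False, False] (\<lambda>js y. - ?Z js y) [c, d, a, b] x"
    proof (rule covD_loc[OF x])
      fix js' :: "'n list" and y assume "length js' = length [d, a, b]" and y: "y \<in> U"
      then obtain p q r where js': "js' = [p, q, r]" using len3 by force
      show "?Y js' y = - ?Z js' y" using YZ[OF y, of p q r] unfolding js' by simp
    qed
    also have "\<dots> = - covD g [False, False, False] ?Z [c, d, a, b] x" by (rule covD_minus[OF x sZ])
    finally show ?thesis .
  qed
  have pt: "(\<Sum>e\<in>UNIV. ?DR [c, d, a, b, e] x * lowV V [e] x)
      = - (\<Sum>e\<in>UNIV. \<Sum>k\<in>UNIV. g x $ d $ k * (?DR [c, b, e, a, k] x * V x $ e + riem g x b e a k * ?nV [c, e] x))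
        - (\<Sum>e\<in>UNIV. riem g x d a b e * ?N1 [c, e] x)" for c d
    using YZc[of c d] leib_Rw[OF x s0, of c d a b] leib_Z[OF x V, of c d a b] by simp
  have "(\<Sum>c\<in>UNIV. \<Sum>d\<in>UNIV. ginv g x $ c $ d * (\<Sum>e\<in>UNIV. ?DR [c, d, a, b, e] x * lowV V [e] x))
     = - (\<Sum>c\<in>UNIV. \<Sum>d\<in>UNIV. ginv g x $ c $ d * (\<Sum>e\<in>UNIV. \<Sum>k\<in>UNIV. g x $ d $ k * (?DR [c, b, e, a, k] x * V x $ e + riem g x b e a k * ?nV [c, e] x)))
       - (\<Sum>c\<in>UNIV. \<Sum>d\<in>UNIV. ginv g x $ c $ d * (\<Sum>e\<in>UNIV. riem g x d a b e * ?N1 [c, e] x))"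
    by (simp only: pt right_diff_distrib mult_minus_right sum_subtractf sum_negf)
  also have "(\<Sum>c\<in>UNIV. \<Sum>d\<in>UNIV. ginv g x $ c $ d * (\<Sum>e\<in>UNIV. \<Sum>k\<in>UNIV. g x $ d $ k * (?DR [c, b, e, a, k] x * V x $ e + riem g x b e a k * ?nV [c, e] x)))
     = (\<Sum>c\<in>UNIV. \<Sum>e\<in>UNIV. ?DR [c, b, e, a, c] x * V x $ e + riem g x b e a c * ?nV [c, e] x)"
    by (simp only: contr_gg[OF x])
  also have "\<dots> = (\<Sum>e\<in>UNIV. V x $ e * (\<Sum>c\<in>UNIV. ?DR [c, b, e, a, c] x)) + (\<Sum>c\<in>UNIV. \<Sum>e\<in>UNIV. riem g x b e a c * ?nV [c, e] x)"
    apply (simp only: sum.distrib sum_distrib_left)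
    apply (subst sum.swap)
    apply (simp add: mult_ac)
    done
  also have "(\<Sum>e\<in>UNIV. V x $ e * (\<Sum>c\<in>UNIV. ?DR [c, b, e, a, c] x))
      = (\<Sum>e\<in>UNIV. V x $ e * (covD g [False, False] RicT [e, b, a] x - covD g [False, False] RicT [b, e, a] x))"
    by (simp only: bianchi2_contr[OF x])
  finally show ?thesis using PZ[OF x V, of a b] by simp
qed

lemma split4: "(\<Sum>c\<in>UNIV. \<Sum>d\<in>UNIV. (G c d :: real) * (A c d + B c d + C c d + D c d))
   = (\<Sum>c\<in>UNIV. \<Sum>d\<in>UNIV. G c d * A c d) + (\<Sum>c\<in>UNIV. \<Sum>d\<in>UNIV. G c d * B c d)
   + (\<Sum>c\<in>UNIV. \<Sum>d\<in>UNIV. G c d * C c d) + (\<Sum>c\<in>UNIV. \<Sum>d\<in>UNIV. G c d * D c d)"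
  by (simp add: distrib_left sum.distrib)

lemma ident2:
  assumes x: "x \<in> U" and V: "\<And>i. sm (\<lambda>y. V y $ i)"
  shows "boxT g (lie2 V (gt g)) a b x - 2 * riemT g (lie2 V (gt g)) a b x - lie2 (boxV g V) (gt g) a b x
    = 2 * lie2 V (ric g) a b x - lie2 (ricV g V) (gt g) a b x - 2 * symT (ricT g (lie2 V (gt g))) a b x"
proof -
  let ?N1 = "covD g [False] (lowV V)"
  let ?N3 = "covD g [False, False, False] (covD g [False, False] ?N1)"
  let ?G = "\<lambda>c d. ginv g x $ c $ d"
  let ?Q = "\<lambda>a b. \<Sum>c\<in>UNIV. \<Sum>d\<in>UNIV. ginv g x $ c $ d * ?N3 [c, d, a, b] x"
  let ?M = "covD g [False] (lowV (boxV g V))"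
  let ?Mr = "covD g [False] (lowV (ricV g V))"
  let ?nV = "covD g [True] (vt V)"
  let ?DRic = "covD g [False, False] RicT"
  let ?RN = "\<lambda>a b. \<Sum>c\<in>UNIV. \<Sum>d\<in>UNIV. ginv g x $ c $ d * ric g a d x * ?N1 [c, b] x"
  let ?T4 = "\<lambda>a b. \<Sum>c\<in>UNIV. \<Sum>d\<in>UNIV. ginv g x $ c $ d * (\<Sum>e\<in>UNIV. covD g [False, False, False, True] RT [c, d, a, b, e] x * lowV V [e] x)"
  have bV: "\<And>i. sm (\<lambda>y. boxV g V y $ i)" using V by simp
  have rV: "\<And>i. sm (\<lambda>y. ricV g V y $ i)" using V by simp
  have e1: "boxT g (lie2 V (gt g)) a b x = - (?Q a b + ?Q b a)"
    unfolding E1[OF x V] by (simp add: distrib_left sum.distrib)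
  have q: "?Q p q = - ?M [p, q] x + ?RN p q + Wt ?N1 x p q + Wt ?N1 x p q + ?T4 p q" for p q
    unfolding E2[OF x V] split4 E4[OF x] E5a[OF x] E5b[OF x] by simp
  have t4: "?T4 p q = - (\<Sum>e\<in>UNIV. V x $ e * (?DRic [e, q, p] x - ?DRic [q, e, p] x))" for p q
    by (rule E7[OF x V])
  have s3: "(\<Sum>e\<in>UNIV. V x $ e * (?DRic [e, q, p] x - ?DRic [q, e, p] x))
     = (\<Sum>c\<in>UNIV. V x $ c * ?DRic [c, p, q] x) - (\<Sum>d\<in>UNIV. ?DRic [q, p, d] x * V x $ d)" for p q
  proof -
    have "(\<Sum>e\<in>UNIV. V x $ e * (?DRic [e, q, p] x - ?DRic [q, e, p] x))
       = (\<Sum>e\<in>UNIV. V x $ e * ?DRic [e, p, q] x - ?DRic [q, p, e] x * V x $ e)"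
    proof (rule sum.cong[OF refl])
      fix e
      show "V x $ e * (?DRic [e, q, p] x - ?DRic [q, e, p] x) = V x $ e * ?DRic [e, p, q] x - ?DRic [q, p, e] x * V x $ e"
        using nablaRic_sym[OF x, of e q p] nablaRic_sym[OF x, of q e p] by (simp add: algebra_simps)
    qed
    then show ?thesis by (simp add: sum_subtractf)
  qed
  have e6: "riemT g (lie2 V (gt g)) a b x = - (Wt ?N1 x a b + Wt ?N1 x b a)"
    unfolding riemT_def lie2_g[OF x V] by (rule E6[OF x])
  have lb: "lie2 (boxV g V) (gt g) a b x = ?M [a, b] x + ?M [b, a] x" by (rule lie2_g[OF x bV])
  have e8: "lie2 V (ric g) a b x = (\<Sum>c\<in>UNIV. V x $ c * ?DRic [c, a, b] x)
     + (\<Sum>d\<in>UNIV. ric g b d x * ?nV [a, d] x) + (\<Sum>d\<in>UNIV. ric g a d x * ?nV [b, d] x)"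
  proof -
    have "(\<Sum>c\<in>UNIV. ric g c b x * ?nV [a, c] x) = (\<Sum>d\<in>UNIV. ric g b d x * ?nV [a, d] x)"
      using ric_sym[OF x] by simp
    then show ?thesis using E8[OF x V, of a b] by simp
  qed
  have lr: "lie2 (ricV g V) (gt g) a b x = ?Mr [a, b] x + ?Mr [b, a] x" by (rule lie2_g[OF x rV])
  have e9: "?Mr [p, q] x = (\<Sum>d\<in>UNIV. ?DRic [p, q, d] x * V x $ d) + (\<Sum>d\<in>UNIV. ric g q d x * ?nV [p, d] x)" for p q
    by (rule E9[OF x V])
  have e10: "ricT g (lie2 V (gt g)) p q x = ?RN p q + (\<Sum>d\<in>UNIV. ric g p d x * ?nV [q, d] x)" for p q
    by (rule E10[OF x V])
  have s4: "(\<Sum>c\<in>UNIV. V x $ c * ?DRic [c, b, a] x) = (\<Sum>c\<in>UNIV. V x $ c * ?DRic [c, a, b] x)"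
    using nablaRic_sym[OF x] by simp
  show ?thesis
    unfolding symT_def e1 e6 lb e8 lr e9 e10 q[of a b] q[of b a] t4 s3 s4
    by (simp add: algebra_simps)
qed

end


theorem lemmaA1:
  fixes U :: "(real^'n::finite) set"
    and g :: "real^'n \<Rightarrow> real^'n^'n"
    and V :: "real^'n \<Rightarrow> real^'n"
  assumes "open U"
    and "\<forall>i j. smooth_on U (\<lambda>x. g x $ i $ j)"
    and "\<forall>x\<in>U. \<forall>i j. g x $ i $ j = g x $ j $ i"
    and "\<forall>x\<in>U. invertible (g x)"
    and "\<forall>i. smooth_on U (\<lambda>x. V x $ i)"
  shows "(\<forall>x\<in>U. boxV g V x
            + raise g (divT g (\<lambda>a b y. lie2 V (gt g) a b y - divV g V y * g y $ a $ b)) x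
          = ricV g V x) \<and>
         (\<forall>x\<in>U. \<forall>a b.
            boxT g (lie2 V (gt g)) a b x - 2 * riemT g (lie2 V (gt g)) a b x
              - lie2 (boxV g V) (gt g) a b x
          = 2 * lie2 V (ric g) a b x - lie2 (ricV g V) (gt g) a b x
              - 2 * symT (ricT g (lie2 V (gt g))) a b x)"
proof -
  interpret geo U g
    by (unfold_locales) (use assms(1-4) in auto)
  have V: "\<And>i. smooth_on U (\<lambda>x. V x $ i)" using assms(5) by blast
  show ?thesis using ident1[OF _ V] ident2[OF _ V] by blast
qed


end
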